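(* Let $n\ge2$. The assignment $\phi(r_0)=R_n$, $\phi(e_0)=E_n$, $\phi(r_i)=R_{n-i}R_{n+i}$, $\phi(e_i)=E_{n-i}E_{n+i}$ for $0<i<n$ extends to a $\mathbb{Z}[\delta^{\pm1}]$-algebra homomorphism $\phi:\mathrm{Br}(\mathrm{C}_n)\to\mathrm{SBr}(\mathrm{A}_{2n-1})$.
   Context: Let $R$ be a commutative ring with an invertible element $\delta$, and $n\ge1$. The Brauer algebra of type $\mathrm{C}_n$, $\mathrm{Br}(\mathrm{C}_n,R,\delta)$, is the unital associative $R$-algebra generated by $r_0,\dots,r_{n-1},e_0,\dots,e_{n-1}$ subject to the following relations, where for distinct $i,j\in\{0,\dots,n-1\}$ we write $i\sim j$ if $|i-j|=1$ and $i\nsim j$ otherwise: $r_i^2=1$ and $r_ie_i=e_ir_i=e_i$ for all $i$; $e_i^2=\delta^2e_i$ for $i>0$; $e_0^2=\delta e_0$; $r_ir_j=r_jr_i$, $e_ir_j=r_je_i$, $e_ie_j=e_je_i$ for $i\nsim j$; $r_ir_jr_i=r_jr_ir_j$, $r_jr_ie_j=e_ie_j$, $r_ie_jr_i=r_je_ir_j$ for $i\sim j$ with $i,j>0$; and $r_1r_0r_1r_0=r_0r_1r_0r_1$, $r_1r_0e_1=r_0e_1$, $r_1e_0r_1e_0=e_0e_1e_0$, $r_1r_0r_1e_0=e_0r_1r_0r_1$, $e_1r_0e_1=\delta e_1$, $e_1e_0e_1=\delta e_1$, $e_1r_0r_1=e_1r_0$, $e_1e_0r_1=e_1e_0$. Write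 $\mathrm{Br}(\mathrm{C}_n)=\mathrm{Br}(\mathrm{C}_n,\mathbb{Z}[\delta^{\pm1}],\delta)$. $\mathrm{Br}(\mathrm{A}_{2n-1})$ denotes the classical Brauer algebra on $2n$ strands over $\mathbb{Z}[\delta^{\pm1}]$: it is free with basis the Brauer diagrams, i.e. perfect matchings of the $4n$ dots $(j,1),(j,0)$, $1\le j\le 2n$, with multiplication by concatenation where each closed loop formed is replaced by a factor $\delta$. $R_j$ ($1\le j\le 2n-1$) is the diagram joining $(j,1)$ to $(j+1,0)$, $(j+1,1)$ to $(j,0)$ and $(k,1)$ to $(k,0)$ for $k\ne j,j+1$; $E_j$ is the diagram joining $(j,1)$ to $(j+1,1)$, $(j,0)$ to $(j+1,0)$ and $(k,1)$ to $(k,0)$ for $k\neq j,j+1$. A Brauer diagram is symmetric if it is invariant under the reflection $(j,\epsilon)\mapsto(2n+1-j,\epsilon)$. $\mathrm{SBr}(\mathrm{A}_{2n-1})$ is the $\mathbb{Z}[\delta^{\pm1}]$-span of the symmetric diagrams (a subalgebra). *)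

theory Defs
  imports Main
begin

text \<open>Dots are pairs (j, eps) with 1 <= j <= m; eps = True encodes the top row (j,1),
  eps = False the bottom row (j,0). A diagram is a fixed-point-free involution of the dots
  (a perfect matching), extended by the identity outside the dots.\<close>

type_synonym dot = "nat \<times> bool"
type_synonym diagram = "dot \<Rightarrow> dot"

definition dots :: "nat \<Rightarrow> dot set" where
  "dots m = {1..m} \<times> UNIV"

definition brauer_diagrams :: "nat \<Rightarrow> diagram set" where
  "brauer_diagrams m =
     {d. (\<forall>x\<in>dots m. d x \<in> dots m \<and> d x \<noteq> x \<and> d (d x) = x) \<and> (\<forall>x. x \<notin> dots m \<longrightarrow> d x = x)}"

text \<open>Concatenation: d1 on top, d2 below; the bottom row of d1 is identified with the top
  row of d2 (the middle row).\<close>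

datatype vtx = Top nat | Mid nat | Bot nat

fun upper_emb :: "dot \<Rightarrow> vtx" where
  "upper_emb (j, True) = Top j"
| "upper_emb (j, False) = Mid j"

fun lower_emb :: "dot \<Rightarrow> vtx" where
  "lower_emb (j, True) = Mid j"
| "lower_emb (j, False) = Bot j"

fun outer_emb :: "dot \<Rightarrow> vtx" where
  "outer_emb (j, True) = Top j"
| "outer_emb (j, False) = Bot j"

definition is_mid :: "vtx \<Rightarrow> bool" where
  "is_mid v = (\<exists>j. v = Mid j)"

definition concat_edges :: "nat \<Rightarrow> diagram \<Rightarrow> diagram \<Rightarrow> (vtx \<times> vtx) set" where
  "concat_edges m d1 d2 =
     {(upper_emb x, upper_emb (d1 x)) | x. x \<in> dots m} \<union> {(lower_emb x, lower_emb (d2 x)) | x. x \<in> dots m}"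

definition concat_conn :: "nat \<Rightarrow> diagram \<Rightarrow> diagram \<Rightarrow> (vtx \<times> vtx) set" where
  "concat_conn m d1 d2 = (concat_edges m d1 d2)\<^sup>*"

definition concat :: "nat \<Rightarrow> diagram \<Rightarrow> diagram \<Rightarrow> diagram" where
  "concat m d1 d2 = (\<lambda>x. if x \<in> dots m
       then (THE y. y \<in> dots m \<and> y \<noteq> x \<and> (outer_emb x, outer_emb y) \<in> concat_conn m d1 d2)
       else x)"

definition loops :: "nat \<Rightarrow> diagram \<Rightarrow> diagram \<Rightarrow> nat" where
  "loops m d1 d2 = card {C. \<exists>j\<in>{1..m}. C = concat_conn m d1 d2 `` {Mid j} \<and> (\<forall>v\<in>C. is_mid v)}"

text \<open>An element is its coefficient function on diagrams (only values on brauer_diagrams m matter).\<close>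

definition br_mult :: "nat \<Rightarrow> 'a::comm_ring_1 \<Rightarrow> (diagram \<Rightarrow> 'a) \<Rightarrow> (diagram \<Rightarrow> 'a) \<Rightarrow> (diagram \<Rightarrow> 'a)" where
  "br_mult m \<delta> f g = (\<lambda>D. \<Sum>D1\<in>brauer_diagrams m. \<Sum>D2\<in>brauer_diagrams m.
       if concat m D1 D2 = D then f D1 * g D2 * \<delta> ^ loops m D1 D2 else 0)"

definition br_basis :: "diagram \<Rightarrow> (diagram \<Rightarrow> 'a::comm_ring_1)" where
  "br_basis D = (\<lambda>D'. if D' = D then 1 else 0)"

definition br_smult :: "'a::comm_ring_1 \<Rightarrow> (diagram \<Rightarrow> 'a) \<Rightarrow> (diagram \<Rightarrow> 'a)" where
  "br_smult c f = (\<lambda>D. c * f D)"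

definition id_diag :: "nat \<Rightarrow> diagram" where
  "id_diag m = (\<lambda>(j, eps). if (j, eps) \<in> dots m then (j, \<not> eps) else (j, eps))"

definition br_one :: "nat \<Rightarrow> (diagram \<Rightarrow> 'a::comm_ring_1)" where
  "br_one m = br_basis (id_diag m)"

definition R_diag :: "nat \<Rightarrow> nat \<Rightarrow> diagram" where
  "R_diag m j = (\<lambda>(k, eps). if (k, eps) \<notin> dots m then (k, eps)
      else if k = j then (j + 1, \<not> eps)
      else if k = j + 1 then (j, \<not> eps)
      else (k, \<not> eps))"

definition E_diag :: "nat \<Rightarrow> nat \<Rightarrow> diagram" where
  "E_diag m j = (\<lambda>(k, eps). if (k, eps) \<notin> dots m then (k, eps)
      else if k = j then (j + 1, eps)
      else if k = j + 1 then (j, eps)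
      else (k, \<not> eps))"

definition mirror :: "nat \<Rightarrow> dot \<Rightarrow> dot" where
  "mirror m = (\<lambda>(j, eps). (m + 1 - j, eps))"

definition symmetric_diag :: "nat \<Rightarrow> diagram \<Rightarrow> bool" where
  "symmetric_diag m D = (\<forall>x\<in>dots m. D (mirror m x) = mirror m (D x))"

definition SBr :: "nat \<Rightarrow> (diagram \<Rightarrow> 'a::comm_ring_1) set" where
  "SBr m = {f. \<forall>D. f D \<noteq> 0 \<longrightarrow> D \<in> brauer_diagrams m \<and> symmetric_diag m D}"

datatype Cgen = gr nat | ge nat

definition nadj :: "nat \<Rightarrow> nat \<Rightarrow> bool" where
  "nadj i j = (i \<noteq> j \<and> i + 1 \<noteq> j \<and> j + 1 \<noteq> i)"

definition adj :: "nat \<Rightarrow> nat \<Rightarrow> bool" where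
  "adj i j = (i + 1 = j \<or> j + 1 = i)"

text \<open>A relation (l, k, r) stands for the defining relation  l = delta^k r  between words.\<close>
definition BrC_rels :: "nat \<Rightarrow> (Cgen list \<times> nat \<times> Cgen list) set" where
  "BrC_rels n =
     {([gr i, gr i], 0, []) | i. i < n}
   \<union> {([gr i, ge i], 0, [ge i]) | i. i < n}
   \<union> {([ge i, gr i], 0, [ge i]) | i. i < n}
   \<union> {([ge i, ge i], 2, [ge i]) | i. 0 < i \<and> i < n}
   \<union> {([ge 0, ge 0], 1, [ge 0])}
   \<union> {([gr i, gr j], 0, [gr j, gr i]) | i j. i < n \<and> j < n \<and> nadj i j}
   \<union> {([ge i, gr j], 0, [gr j, ge i]) | i j. i < n \<and> j < n \<and> nadj i j}
   \<union> {([ge i, ge j], 0, [ge j, ge i]) | i j. i < n \<and> j < n \<and> nadj i j}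
   \<union> {([gr i, gr j, gr i], 0, [gr j, gr i, gr j]) | i j. 0 < i \<and> 0 < j \<and> i < n \<and> j < n \<and> adj i j}
   \<union> {([gr j, gr i, ge j], 0, [ge i, ge j]) | i j. 0 < i \<and> 0 < j \<and> i < n \<and> j < n \<and> adj i j}
   \<union> {([gr i, ge j, gr i], 0, [gr j, ge i, gr j]) | i j. 0 < i \<and> 0 < j \<and> i < n \<and> j < n \<and> adj i j}
   \<union> (if 1 < n then
       {([gr 1, gr 0, gr 1, gr 0], 0, [gr 0, gr 1, gr 0, gr 1]),
        ([gr 1, gr 0, ge 1], 0, [gr 0, ge 1]),
        ([gr 1, ge 0, gr 1, ge 0], 0, [ge 0, ge 1, ge 0]),
        ([gr 1, gr 0, gr 1, ge 0], 0, [ge 0, gr 1, gr 0, gr 1]),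
        ([ge 1, gr 0, ge 1], 1, [ge 1]),
        ([ge 1, ge 0, ge 1], 1, [ge 1]),
        ([ge 1, gr 0, gr 1], 0, [ge 1, gr 0]),
        ([ge 1, ge 0, gr 1], 0, [ge 1, ge 0])}
      else {})"

definition word_eval :: "nat \<Rightarrow> 'a::comm_ring_1 \<Rightarrow> (Cgen \<Rightarrow> diagram \<Rightarrow> 'a) \<Rightarrow> Cgen list \<Rightarrow> (diagram \<Rightarrow> 'a)" where
  "word_eval m \<delta> \<phi> w = foldr (\<lambda>g acc. br_mult m \<delta> (\<phi> g) acc) w (br_one m)"

fun phiC :: "nat \<Rightarrow> 'a::comm_ring_1 \<Rightarrow> Cgen \<Rightarrow> (diagram \<Rightarrow> 'a)" where
  "phiC n \<delta> (gr i) = (if i = 0 then br_basis (R_diag (2*n) n)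
      else br_mult (2*n) \<delta> (br_basis (R_diag (2*n) (n - i))) (br_basis (R_diag (2*n) (n + i))))"
| "phiC n \<delta> (ge i) = (if i = 0 then br_basis (E_diag (2*n) n)
      else br_mult (2*n) \<delta> (br_basis (E_diag (2*n) (n - i))) (br_basis (E_diag (2*n) (n + i))))"

end

theory Submission
  imports Defs "HOL-Library.FuncSet"
begin

lemma mem_dots[simp]: "((j, e) \<in> dots m) = (1 \<le> j \<and> j \<le> m)"
  by (auto simp: dots_def)

lemma BD_iff: "D \<in> brauer_diagrams m \<longleftrightarrow>
  (\<forall>x\<in>dots m. D x \<in> dots m \<and> D x \<noteq> x \<and> D (D x) = x) \<and> (\<forall>x. x \<notin> dots m \<longrightarrow> D x = x)"
  by (simp add: brauer_diagrams_def)

lemma BD_in: "D \<in> brauer_diagrams m \<Longrightarrow> x \<in> dots m \<Longrightarrow> D x \<in> dots m"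
  unfolding brauer_diagrams_def by blast
lemma BD_ne: "D \<in> brauer_diagrams m \<Longrightarrow> x \<in> dots m \<Longrightarrow> D x \<noteq> x"
  unfolding brauer_diagrams_def by blast
lemma BD_inv: "D \<in> brauer_diagrams m \<Longrightarrow> x \<in> dots m \<Longrightarrow> D (D x) = x"
  unfolding brauer_diagrams_def by blast
lemma BD_out: "D \<in> brauer_diagrams m \<Longrightarrow> x \<notin> dots m \<Longrightarrow> D x = x"
  unfolding brauer_diagrams_def by blast

lemma finite_dots: "finite (dots m)"
  by (simp add: dots_def)

lemma finite_BD: "finite (brauer_diagrams m)"
proof -
  have inj: "inj_on (\<lambda>d. restrict d (dots m)) (brauer_diagrams m)"
  proof (rule inj_onI)
    fix d1 d2 assume a: "d1 \<in> brauer_diagrams m" "d2 \<in> brauer_diagrams m"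
      and e: "restrict d1 (dots m) = restrict d2 (dots m)"
    show "d1 = d2"
    proof
      fix x show "d1 x = d2 x"
        using a BD_out[OF a(1), of x] BD_out[OF a(2), of x] fun_cong[OF e, of x]
        by (cases "x \<in> dots m") (auto simp: restrict_def)
    qed
  qed
  have "(\<lambda>d. restrict d (dots m)) ` brauer_diagrams m \<subseteq> PiE (dots m) (\<lambda>_. dots m)"
    by (auto simp: BD_in)
  moreover have "finite (PiE (dots m) (\<lambda>_. dots m))"
    by (rule finite_PiE) (auto simp: finite_dots)
  ultimately have "finite ((\<lambda>d. restrict d (dots m)) ` brauer_diagrams m)"
    using finite_subset by blast
  thus ?thesis using finite_imageD inj by blast
qed

lemma br_mult_basis:
  assumes "D1 \<in> brauer_diagrams m" "D2 \<in> brauer_diagrams m"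
  shows "br_mult m \<delta> (br_smult a (br_basis D1)) (br_smult b (br_basis D2))
       = br_smult (a * b * \<delta> ^ loops m D1 D2) (br_basis (concat m D1 D2))"
proof
  fix D
  have "br_mult m \<delta> (br_smult a (br_basis D1)) (br_smult b (br_basis D2)) D =
     (\<Sum>E1\<in>brauer_diagrams m. \<Sum>E2\<in>brauer_diagrams m.
        if E1 = D1 then (if E2 = D2 then (if concat m D1 D2 = D then a * b * \<delta> ^ loops m D1 D2 else 0) else 0) else 0)"
    unfolding br_mult_def br_smult_def br_basis_def
    by (intro sum.cong refl) auto
  also have "\<dots> = (if concat m D1 D2 = D then a * b * \<delta> ^ loops m D1 D2 else 0)"
  proof -
    define c where "c = (if concat m D1 D2 = D then a * b * \<delta> ^ loops m D1 D2 else 0)"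
    have inner: "\<And>E1. (\<Sum>E2\<in>brauer_diagrams m. (if E1 = D1 then (if E2 = D2 then c else 0) else 0))
        = (if E1 = D1 then c else 0)"
      by (case_tac "E1 = D1") (simp_all add: finite_BD assms)
    show ?thesis unfolding c_def[symmetric] by (simp only: inner) (simp add: finite_BD assms)
  qed
  also have "\<dots> = br_smult (a * b * \<delta> ^ loops m D1 D2) (br_basis (concat m D1 D2)) D"
    by (simp add: br_smult_def br_basis_def)
  finally show "br_mult m \<delta> (br_smult a (br_basis D1)) (br_smult b (br_basis D2)) D =
      br_smult (a * b * \<delta> ^ loops m D1 D2) (br_basis (concat m D1 D2)) D" .
qed

lemma basis_smult1: "br_basis D = br_smult 1 (br_basis D)"
  by (simp add: br_smult_def)

lemma smult_smult: "br_smult a (br_smult b f) = br_smult (a * b) f"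
  by (simp add: br_smult_def fun_eq_iff mult.assoc)

lemma upper_emb_inj: "upper_emb x = upper_emb y \<longleftrightarrow> x = y"
  by (cases x; cases y; cases "snd x"; cases "snd y") auto
lemma lower_emb_inj: "lower_emb x = lower_emb y \<longleftrightarrow> x = y"
  by (cases x; cases y; cases "snd x"; cases "snd y") auto
lemma outer_emb_inj: "outer_emb x = outer_emb y \<longleftrightarrow> x = y"
  by (cases x; cases y; cases "snd x"; cases "snd y") auto

lemma upper_not_Bot[simp]: "upper_emb x \<noteq> Bot j" "Bot j \<noteq> upper_emb x" by (cases x; cases "snd x"; auto)+
lemma lower_not_Top[simp]: "lower_emb x \<noteq> Top j" "Top j \<noteq> lower_emb x" by (cases x; cases "snd x"; auto)+

lemma upper_edge: "x \<in> dots m \<Longrightarrow> (upper_emb x, upper_emb (D1 x)) \<in> concat_conn m D1 D2"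
  unfolding concat_conn_def concat_edges_def by (rule r_into_rtrancl) blast
lemma lower_edge: "x \<in> dots m \<Longrightarrow> (lower_emb x, lower_emb (D2 x)) \<in> concat_conn m D1 D2"
  unfolding concat_conn_def concat_edges_def by (rule r_into_rtrancl) blast

lemma edges_sym:
  assumes "D1 \<in> brauer_diagrams m" "D2 \<in> brauer_diagrams m"
  shows "sym (concat_edges m D1 D2)"
proof (rule symI)
  fix u v assume "(u, v) \<in> concat_edges m D1 D2"
  then show "(v, u) \<in> concat_edges m D1 D2"
    unfolding concat_edges_def
  proof (elim UnE CollectE exE conjE)
    fix x assume "(u, v) = (upper_emb x, upper_emb (D1 x))" "x \<in> dots m"
    then show "(v, u) \<in> {(upper_emb x, upper_emb (D1 x)) |x. x \<in> dots m} \<union> {(lower_emb x, lower_emb (D2 x)) |x. x \<in> dots m}"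
      using assms BD_in[of D1 m x] BD_inv[of D1 m x] by (intro UnI1 CollectI exI[of _ "D1 x"]) auto
  next
    fix x assume "(u, v) = (lower_emb x, lower_emb (D2 x))" "x \<in> dots m"
    then show "(v, u) \<in> {(upper_emb x, upper_emb (D1 x)) |x. x \<in> dots m} \<union> {(lower_emb x, lower_emb (D2 x)) |x. x \<in> dots m}"
      using assms BD_in[of D2 m x] BD_inv[of D2 m x] by (intro UnI2 CollectI exI[of _ "D2 x"]) auto
  qed
qed

lemma conn_sym:
  assumes "D1 \<in> brauer_diagrams m" "D2 \<in> brauer_diagrams m" "(u, v) \<in> concat_conn m D1 D2"
  shows "(v, u) \<in> concat_conn m D1 D2"
  using sym_rtrancl[OF edges_sym[OF assms(1,2)]] assms(3) unfolding concat_conn_def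
  by (auto dest: symD)

lemma conn_trans:
  "(u, v) \<in> concat_conn m D1 D2 \<Longrightarrow> (v, w) \<in> concat_conn m D1 D2 \<Longrightarrow> (u, w) \<in> concat_conn m D1 D2"
  unfolding concat_conn_def by (rule rtrancl_trans)

lemma conn_refl: "(u, u) \<in> concat_conn m D1 D2"
  unfolding concat_conn_def by simp

definition ST :: "nat \<Rightarrow> diagram \<Rightarrow> diagram \<Rightarrow> ((vtx \<times> bool) \<times> (vtx \<times> bool)) set" where
  "ST m D1 D2 = {((upper_emb x, True), (upper_emb (D1 x), False)) | x. x \<in> dots m}
              \<union> {((lower_emb x, False), (lower_emb (D2 x), True)) | x. x \<in> dots m}"

lemma ST_sv: "single_valued (ST m D1 D2)"
  unfolding single_valued_def ST_def by (auto simp: upper_emb_inj lower_emb_inj)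

definition stt :: "dot \<Rightarrow> vtx \<times> bool" where "stt x = (outer_emb x, snd x)"

lemma outer_fst_stt: "fst (stt x) = outer_emb x" by (simp add: stt_def)

lemma no_pred_stt: "(p, stt x) \<notin> ST m D1 D2"
  unfolding ST_def stt_def
  by (cases x; cases "snd x") (auto simp: upper_not_Bot lower_not_Top dest: sym[of "Top _"] sym[of "Bot _"])

lemma closure_V:
  assumes BD: "D1 \<in> brauer_diagrams m" "D2 \<in> brauer_diagrams m"
    and u: "(u, b) \<in> (ST m D1 D2)\<^sup>* `` {stt x0}"
    and e: "(u, w) \<in> concat_edges m D1 D2"
  shows "w \<in> fst ` ((ST m D1 D2)\<^sup>* `` {stt x0})"
proof -
  let ?R = "(ST m D1 D2)\<^sup>* `` {stt x0}"
  from e show ?thesis unfolding concat_edges_def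
  proof (elim UnE CollectE exE conjE)
    fix y assume uw: "(u, w) = (upper_emb y, upper_emb (D1 y))" and y: "y \<in> dots m"
    show ?thesis
    proof (cases b)
      case True
      then have "((u, b), (w, False)) \<in> ST m D1 D2" using uw y unfolding ST_def by blast
      then have "(w, False) \<in> ?R" using u by (auto intro: rtrancl_into_rtrancl)
      then show ?thesis by force
    next
      case False
      from u have "(stt x0, (u, b)) \<in> (ST m D1 D2)\<^sup>*" by simp
      then show ?thesis
      proof (cases rule: rtranclE)
        case base
        then show ?thesis using False uw unfolding stt_def
          by (cases x0; cases "snd x0") (auto simp: upper_not_Bot dest: sym[of "Bot _"])
      next
        case (step p)
        from step(2) False uw obtain z where z: "z \<in> dots m" "p = (upper_emb z, True)"
          "upper_emb (D1 z) = upper_emb y"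
          unfolding ST_def by auto
        then have "D1 z = y" by (simp add: upper_emb_inj)
        then have "z = D1 y" using BD_inv[OF BD(1) z(1)] by simp
        then have "w = fst p" using uw z by simp
        then show ?thesis using step(1) by force
      qed
    qed
  next
    fix y assume uw: "(u, w) = (lower_emb y, lower_emb (D2 y))" and y: "y \<in> dots m"
    show ?thesis
    proof (cases b)
      case False
      then have "((u, b), (w, True)) \<in> ST m D1 D2" using uw y unfolding ST_def by blast
      then have "(w, True) \<in> ?R" using u by (auto intro: rtrancl_into_rtrancl)
      then show ?thesis by force
    next
      case True
      from u have "(stt x0, (u, b)) \<in> (ST m D1 D2)\<^sup>*" by simp
      then show ?thesis
      proof (cases rule: rtranclE)
        case base
        then show ?thesis using True uw unfolding stt_def
          by (cases x0; cases "snd x0") (auto simp: lower_not_Top dest: sym[of "Top _"])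
      next
        case (step p)
        from step(2) True uw obtain z where z: "z \<in> dots m" "p = (lower_emb z, False)"
          "lower_emb (D2 z) = lower_emb y"
          unfolding ST_def by auto
        then have "D2 z = y" by (simp add: lower_emb_inj)
        then have "z = D2 y" using BD_inv[OF BD(2) z(1)] by simp
        then have "w = fst p" using uw z by simp
        then show ?thesis using step(1) by force
      qed
    qed
  qed
qed

lemma conn_in_V:
  assumes BD: "D1 \<in> brauer_diagrams m" "D2 \<in> brauer_diagrams m"
    and c: "(outer_emb x0, v) \<in> concat_conn m D1 D2"
  shows "v \<in> fst ` ((ST m D1 D2)\<^sup>* `` {stt x0})"
  using c unfolding concat_conn_def
proof (induction rule: rtrancl_induct)
  case base
  have "stt x0 \<in> (ST m D1 D2)\<^sup>* `` {stt x0}" by simp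
  then show ?case by (metis outer_fst_stt image_eqI)
next
  case (step y z)
  then obtain b where "(y, b) \<in> (ST m D1 D2)\<^sup>* `` {stt x0}" by force
  then show ?case using closure_V[OF BD] step by blast
qed

lemma outer_terminal:
  assumes r: "(outer_emb y, b) \<in> (ST m D1 D2)\<^sup>* `` {stt x0}" and ne: "y \<noteq> x0"
  shows "\<forall>s. ((outer_emb y, b), s) \<notin> ST m D1 D2"
proof -
  from r have "(stt x0, (outer_emb y, b)) \<in> (ST m D1 D2)\<^sup>*" by simp
  then show ?thesis
  proof (cases rule: rtranclE)
    case base
    then show ?thesis using ne by (simp add: stt_def outer_emb_inj)
  next
    case (step p)
    obtain k e where ye: "y = (k, e)" by (cases y)
    show ?thesis
    proof (cases e)
      case True
      then have "b = False" using step(2) ye unfolding ST_def by auto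
      then show ?thesis using ye True unfolding ST_def by auto
    next
      case False
      then have "b = True" using step(2) ye unfolding ST_def by auto
      then show ?thesis using ye False unfolding ST_def by auto
    qed
  qed
qed

lemma conn_unique:
  assumes BD: "D1 \<in> brauer_diagrams m" "D2 \<in> brauer_diagrams m"
    and y: "(outer_emb x, outer_emb y) \<in> concat_conn m D1 D2" "y \<noteq> x"
    and z: "(outer_emb x, outer_emb z) \<in> concat_conn m D1 D2" "z \<noteq> x"
  shows "y = z"
proof -
  let ?R = "(ST m D1 D2)\<^sup>* `` {stt x}"
  obtain b1 where b1: "(outer_emb y, b1) \<in> ?R" using conn_in_V[OF BD y(1)] by force
  obtain b2 where b2: "(outer_emb z, b2) \<in> ?R" using conn_in_V[OF BD z(1)] by force
  have t1: "\<forall>s. ((outer_emb y, b1), s) \<notin> ST m D1 D2" using outer_terminal b1 y(2) by blast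
  have t2: "\<forall>s. ((outer_emb z, b2), s) \<notin> ST m D1 D2" using outer_terminal b2 z(2) by blast
  have "((outer_emb y, b1), (outer_emb z, b2)) \<in> (ST m D1 D2)\<^sup>* \<or> ((outer_emb z, b2), (outer_emb y, b1)) \<in> (ST m D1 D2)\<^sup>*"
    using single_valued_confluent[OF ST_sv] b1 b2 by auto
  then have "(outer_emb y, b1) = (outer_emb z, b2)"
    using t1 t2 by (auto elim: converse_rtranclE)
  then show ?thesis by (simp add: outer_emb_inj)
qed

lemma concat_eqI:
  assumes BD: "D1 \<in> brauer_diagrams m" "D2 \<in> brauer_diagrams m"
    and f: "\<And>x. x \<in> dots m \<Longrightarrow> f x \<in> dots m \<and> f x \<noteq> x \<and> (outer_emb x, outer_emb (f x)) \<in> concat_conn m D1 D2"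
    and fo: "\<And>x. x \<notin> dots m \<Longrightarrow> f x = x"
  shows "concat m D1 D2 = f"
proof
  fix x show "concat m D1 D2 x = f x"
  proof (cases "x \<in> dots m")
    case True
    have "(THE y. y \<in> dots m \<and> y \<noteq> x \<and> (outer_emb x, outer_emb y) \<in> concat_conn m D1 D2) = f x"
      by (rule the_equality) (use f[OF True] conn_unique[OF BD] in blast)+
    then show ?thesis unfolding concat_def using True by simp
  next
    case False then show ?thesis by (simp add: concat_def fo)
  qed
qed

definition tT :: "(nat \<Rightarrow> nat) \<Rightarrow> dot \<Rightarrow> dot" where
  "tT \<sigma> x = (if snd x then (\<sigma> (fst x), True) else x)"

definition relT :: "nat \<Rightarrow> (nat \<Rightarrow> nat) \<Rightarrow> diagram \<Rightarrow> diagram" where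
  "relT m \<sigma> D = (\<lambda>x. if x \<in> dots m then tT \<sigma> (D (tT \<sigma> x)) else x)"

definition capT :: "nat \<Rightarrow> nat \<Rightarrow> diagram \<Rightarrow> diagram" where
  "capT m j D = (\<lambda>x. if x \<notin> dots m then x
      else if x = (j, True) then (j + 1, True)
      else if x = (j + 1, True) then (j, True)
      else if D (j, True) = (j + 1, True) then D x
      else if x = D (j, True) then D (j + 1, True)
      else if x = D (j + 1, True) then D (j, True)
      else D x)"

definition invol :: "nat \<Rightarrow> (nat \<Rightarrow> nat) \<Rightarrow> bool" where
  "invol m \<sigma> = (\<forall>k. 1 \<le> k \<and> k \<le> m \<longrightarrow> 1 \<le> \<sigma> k \<and> \<sigma> k \<le> m \<and> \<sigma> (\<sigma> k) = k)"

lemma tT_dots: "invol m \<sigma> \<Longrightarrow> x \<in> dots m \<Longrightarrow> tT \<sigma> x \<in> dots m"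
  by (cases x) (auto simp: tT_def invol_def)
lemma tT_tT: "invol m \<sigma> \<Longrightarrow> x \<in> dots m \<Longrightarrow> tT \<sigma> (tT \<sigma> x) = x"
  by (cases x) (auto simp: tT_def invol_def)

lemma relT_BD:
  assumes D: "D \<in> brauer_diagrams m" and s: "invol m \<sigma>"
  shows "relT m \<sigma> D \<in> brauer_diagrams m"
  unfolding BD_iff
proof (intro conjI ballI allI impI)
  fix x assume x: "x \<in> dots m"
  have a: "tT \<sigma> x \<in> dots m" using tT_dots[OF s x] .
  have b: "D (tT \<sigma> x) \<in> dots m" using BD_in[OF D a] .
  show "relT m \<sigma> D x \<in> dots m" using x tT_dots[OF s b] by (simp add: relT_def)
  show "relT m \<sigma> D x \<noteq> x"
  proof
    assume "relT m \<sigma> D x = x"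
    then have "tT \<sigma> (D (tT \<sigma> x)) = x" using x by (simp add: relT_def)
    then have "D (tT \<sigma> x) = tT \<sigma> x" using tT_tT[OF s b] by metis
    then show False using BD_ne[OF D a] by simp
  qed
  show "relT m \<sigma> D (relT m \<sigma> D x) = x"
    using x tT_dots[OF s b] tT_tT[OF s b] BD_inv[OF D a] tT_tT[OF s x]
    by (simp add: relT_def)
next
  fix x assume "x \<notin> dots m" then show "relT m \<sigma> D x = x" by (simp add: relT_def)
qed

lemma capT_loop:
  assumes D: "D \<in> brauer_diagrams m" and j: "1 \<le> j" "j + 1 \<le> m" and l: "D (j, True) = (j + 1, True)"
  shows "capT m j D = D"
proof
  fix x
  have "D (j + 1, True) = (j, True)" using BD_inv[OF D, of "(j, True)"] l j by simp
  then show "capT m j D x = D x" using l BD_out[OF D, of x] by (auto simp: capT_def)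
qed

lemma capT_vals:
  assumes D: "D \<in> brauer_diagrams m" and j: "1 \<le> j" "j + 1 \<le> m" and l: "D (j, True) \<noteq> (j + 1, True)"
  shows "capT m j D (j, True) = (j + 1, True)" "capT m j D (j + 1, True) = (j, True)"
    "capT m j D (D (j, True)) = D (j + 1, True)" "capT m j D (D (j + 1, True)) = D (j, True)"
    "\<And>x. x \<in> dots m \<Longrightarrow> x \<notin> {(j, True), (j + 1, True), D (j, True), D (j + 1, True)} \<Longrightarrow> capT m j D x = D x"
    "D (j, True) \<noteq> (j, True)" "D (j + 1, True) \<noteq> (j + 1, True)" "D (j + 1, True) \<noteq> (j, True)"
    "D (j, True) \<noteq> D (j + 1, True)"
proof -
  let ?A = "(j, True)" and ?B = "(j + 1, True)"
  have A: "?A \<in> dots m" and B: "?B \<in> dots m" using j by auto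
  note facts = BD_in[OF D A] BD_in[OF D B] BD_ne[OF D A] BD_ne[OF D B] BD_inv[OF D A] BD_inv[OF D B]
  have nBA: "D ?B \<noteq> ?A"
  proof
    assume "D ?B = ?A" then have "D (D ?B) = D ?A" by simp
    then show False using facts(6) l by simp
  qed
  have nab: "D ?A \<noteq> D ?B"
  proof
    assume "D ?A = D ?B" then have "D (D ?A) = D (D ?B)" by simp
    then show False using facts(5,6) by simp
  qed
  show "D ?A \<noteq> ?A" "D ?B \<noteq> ?B" "D ?B \<noteq> ?A" "D ?A \<noteq> D ?B" using facts nBA nab by auto
  show "capT m j D ?A = ?B" "capT m j D ?B = ?A" using A B by (simp_all add: capT_def)
  show "capT m j D (D ?A) = D ?B" using facts(1,3) l by (simp add: capT_def)
  show "capT m j D (D ?B) = D ?A" using facts(2,4) l nBA nab by (simp add: capT_def)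
  show "\<And>x. x \<in> dots m \<Longrightarrow> x \<notin> {?A, ?B, D ?A, D ?B} \<Longrightarrow> capT m j D x = D x"
    using l by (simp add: capT_def)
qed

lemma capT_BD:
  assumes D: "D \<in> brauer_diagrams m" and j: "1 \<le> j" "j + 1 \<le> m"
  shows "capT m j D \<in> brauer_diagrams m"
proof (cases "D (j, True) = (j + 1, True)")
  case True
  then show ?thesis using capT_loop[OF D j True] D by simp
next
  case False
  let ?A = "(j, True)" and ?B = "(j + 1, True)"
  have A: "?A \<in> dots m" and B: "?B \<in> dots m" using j by auto
  note facts = BD_in[OF D A] BD_in[OF D B] BD_ne[OF D A] BD_ne[OF D B] BD_inv[OF D A] BD_inv[OF D B]
  note v = capT_vals[OF D j False]
  show ?thesis unfolding BD_iff
  proof (intro conjI ballI allI impI)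
    fix x assume x: "x \<in> dots m"
    note fx = BD_in[OF D x] BD_ne[OF D x] BD_inv[OF D x]
    have cases: "x = ?A \<or> x = ?B \<or> x = D ?A \<or> x = D ?B \<or> x \<notin> {?A, ?B, D ?A, D ?B}" by blast
    have other: "x \<notin> {?A, ?B, D ?A, D ?B} \<Longrightarrow> D x \<notin> {?A, ?B, D ?A, D ?B}"
    proof -
      assume xo: "x \<notin> {?A, ?B, D ?A, D ?B}"
      show "D x \<notin> {?A, ?B, D ?A, D ?B}"
      proof
        assume "D x \<in> {?A, ?B, D ?A, D ?B}"
        then have "D (D x) \<in> {D ?A, D ?B, D (D ?A), D (D ?B)}" by auto
        then show False using xo fx(3) facts(5,6) by auto
      qed
    qed
    show "capT m j D x \<in> dots m" using cases
    proof (elim disjE)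
      assume "x = ?A" then show ?thesis using B by (simp only: v(1))
    next assume "x = ?B" then show ?thesis using A by (simp only: v(2))
    next assume "x = D ?A" then show ?thesis using facts(2) by (simp only: v(3))
    next assume "x = D ?B" then show ?thesis using facts(1) by (simp only: v(4))
    next assume "x \<notin> {?A, ?B, D ?A, D ?B}" then show ?thesis using v(5)[OF x] fx by simp
    qed
    show "capT m j D x \<noteq> x" using cases
    proof (elim disjE)
      assume "x = ?A" then show ?thesis by (simp only: v(1)) simp
    next assume "x = ?B" then show ?thesis by (simp only: v(2)) simp
    next assume "x = D ?A" then show ?thesis using v(9) by (simp only: v(3)) metis
    next assume "x = D ?B" then show ?thesis using v(9) by (simp only: v(4)) metis
    next assume "x \<notin> {?A, ?B, D ?A, D ?B}" then show ?thesis using v(5)[OF x] fx by simp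
    qed
    show "capT m j D (capT m j D x) = x" using cases
    proof (elim disjE)
      assume "x = ?A" then show ?thesis by (simp only: v(1,2))
    next assume "x = ?B" then show ?thesis by (simp only: v(1,2))
    next assume "x = D ?A" then show ?thesis by (simp only: v(3,4))
    next assume "x = D ?B" then show ?thesis by (simp only: v(3,4))
    next assume xo: "x \<notin> {?A, ?B, D ?A, D ?B}"
      then show ?thesis using v(5)[OF x xo] v(5)[OF fx(1) other[OF xo]] fx(3) by simp
    qed
  next
    fix x assume "x \<notin> dots m" then show "capT m j D x = x" by (simp add: capT_def)
  qed
qed

lemma upper_emb_Mid: "upper_emb x = Mid k \<longleftrightarrow> x = (k, False)"
  by (cases x; cases "snd x") auto
lemma lower_emb_Mid: "lower_emb x = Mid k \<longleftrightarrow> x = (k, True)"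
  by (cases x; cases "snd x") auto
lemma outer_not_mid: "\<not> is_mid (outer_emb y)"
  by (cases y; cases "snd y") (auto simp: is_mid_def)

lemma edge_from_Mid:
  "(Mid k, w) \<in> concat_edges m D1 D2 \<Longrightarrow> w = upper_emb (D1 (k, False)) \<or> w = lower_emb (D2 (k, True))"
  unfolding concat_edges_def by (auto simp: upper_emb_Mid lower_emb_Mid dest: sym[of "Mid k"])

lemma closed_sub:
  assumes cl: "\<forall>v\<in>S. \<forall>w. (v, w) \<in> concat_edges m D1 D2 \<longrightarrow> w \<in> S"
    and v: "v \<in> S" and c: "(v, w) \<in> concat_conn m D1 D2"
  shows "w \<in> S"
  using c v unfolding concat_conn_def by (induction rule: rtrancl_induct) (use cl in blast)+

lemma closedK_sub:
  assumes cl: "\<forall>k\<in>K. upper_emb (D1 (k, False)) \<in> Mid ` K \<and> lower_emb (D2 (k, True)) \<in> Mid ` K"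
    and v: "j \<in> K"
  shows "concat_conn m D1 D2 `` {Mid j} \<subseteq> Mid ` K"
proof
  fix w assume "w \<in> concat_conn m D1 D2 `` {Mid j}"
  then have c: "(Mid j, w) \<in> concat_conn m D1 D2" by simp
  have "\<forall>v\<in>Mid ` K. \<forall>w. (v, w) \<in> concat_edges m D1 D2 \<longrightarrow> w \<in> Mid ` K"
    using cl edge_from_Mid by fastforce
  then show "w \<in> Mid ` K" using closed_sub c v by blast
qed

lemma comp_eq:
  assumes BD: "D1 \<in> brauer_diagrams m" "D2 \<in> brauer_diagrams m" and c: "(u, v) \<in> concat_conn m D1 D2"
  shows "concat_conn m D1 D2 `` {u} = concat_conn m D1 D2 `` {v}"
  using c conn_sym[OF BD c] conn_trans by blast

lemma loops_zero:
  assumes "\<forall>j. 1 \<le> j \<and> j \<le> m \<longrightarrow> (\<exists>y\<in>dots m. (Mid j, outer_emb y) \<in> concat_conn m D1 D2)"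
  shows "loops m D1 D2 = 0"
proof -
  have "{C. \<exists>j\<in>{1..m}. C = concat_conn m D1 D2 `` {Mid j} \<and> (\<forall>v\<in>C. is_mid v)} = {}"
    using assms outer_not_mid by fastforce
  then show ?thesis unfolding loops_def by simp
qed

lemma loops_one:
  assumes BD: "D1 \<in> brauer_diagrams m" "D2 \<in> brauer_diagrams m"
    and ja0: "1 \<le> ja0" "ja0 \<le> m" "ja0 \<in> KA"
    and cl: "\<forall>k\<in>KA. upper_emb (D1 (k, False)) \<in> Mid ` KA \<and> lower_emb (D2 (k, True)) \<in> Mid ` KA"
    and all: "\<forall>j. 1 \<le> j \<and> j \<le> m \<longrightarrow> (\<exists>y\<in>dots m. (Mid j, outer_emb y) \<in> concat_conn m D1 D2)
               \<or> (Mid ja0, Mid j) \<in> concat_conn m D1 D2"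
  shows "loops m D1 D2 = 1"
proof -
  let ?C = "concat_conn m D1 D2 `` {Mid ja0}"
  have sub: "?C \<subseteq> Mid ` KA" using closedK_sub[OF cl ja0(3)] .
  have "{C. \<exists>j\<in>{1..m}. C = concat_conn m D1 D2 `` {Mid j} \<and> (\<forall>v\<in>C. is_mid v)} = {?C}"
  proof (intro equalityI subsetI)
    fix C assume "C \<in> {C. \<exists>j\<in>{1..m}. C = concat_conn m D1 D2 `` {Mid j} \<and> (\<forall>v\<in>C. is_mid v)}"
    then obtain j where j: "1 \<le> j" "j \<le> m" "C = concat_conn m D1 D2 `` {Mid j}" "\<forall>v\<in>C. is_mid v" by auto
    from all j(1,2) have dd: "(\<exists>y\<in>dots m. (Mid j, outer_emb y) \<in> concat_conn m D1 D2)
               \<or> (Mid ja0, Mid j) \<in> concat_conn m D1 D2" by blast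
    from dd show "C \<in> {?C}"
    proof (elim disjE bexE)
      fix y assume "y \<in> dots m" "(Mid j, outer_emb y) \<in> concat_conn m D1 D2"
      then have "outer_emb y \<in> C" using j(3) by simp
      then show ?thesis using j(4) outer_not_mid by blast
    next
      assume "(Mid ja0, Mid j) \<in> concat_conn m D1 D2"
      then show ?thesis using comp_eq[OF BD] j by auto
    qed
  next
    fix C assume "C \<in> {?C}"
    then show "C \<in> {C. \<exists>j\<in>{1..m}. C = concat_conn m D1 D2 `` {Mid j} \<and> (\<forall>v\<in>C. is_mid v)}"
      using sub ja0 by (auto simp: is_mid_def)
  qed
  then show ?thesis unfolding loops_def by simp
qed

lemma loops_two:
  assumes BD: "D1 \<in> brauer_diagrams m" "D2 \<in> brauer_diagrams m"
    and ja0: "1 \<le> ja0" "ja0 \<le> m" "ja0 \<in> KA"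
    and cl0: "\<forall>k\<in>KA. upper_emb (D1 (k, False)) \<in> Mid ` KA \<and> lower_emb (D2 (k, True)) \<in> Mid ` KA"
    and jb1: "1 \<le> jb1" "jb1 \<le> m" "jb1 \<in> KB" "jb1 \<notin> KA"
    and cl1: "\<forall>k\<in>KB. upper_emb (D1 (k, False)) \<in> Mid ` KB \<and> lower_emb (D2 (k, True)) \<in> Mid ` KB"
    and all: "\<forall>j. 1 \<le> j \<and> j \<le> m \<longrightarrow> (\<exists>y\<in>dots m. (Mid j, outer_emb y) \<in> concat_conn m D1 D2)
               \<or> (Mid ja0, Mid j) \<in> concat_conn m D1 D2 \<or> (Mid jb1, Mid j) \<in> concat_conn m D1 D2"
  shows "loops m D1 D2 = 2"
proof -
  let ?C0 = "concat_conn m D1 D2 `` {Mid ja0}"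
  let ?C1 = "concat_conn m D1 D2 `` {Mid jb1}"
  have sub0: "?C0 \<subseteq> Mid ` KA" using closedK_sub[OF cl0 ja0(3)] .
  have sub1: "?C1 \<subseteq> Mid ` KB" using closedK_sub[OF cl1 jb1(3)] .
  have ne: "?C0 \<noteq> ?C1"
  proof
    assume "?C0 = ?C1"
    moreover have "Mid jb1 \<in> ?C1" by (simp add: conn_refl)
    ultimately show False using sub0 jb1(4) by auto
  qed
  have "{C. \<exists>j\<in>{1..m}. C = concat_conn m D1 D2 `` {Mid j} \<and> (\<forall>v\<in>C. is_mid v)} = {?C0, ?C1}"
  proof (intro equalityI subsetI)
    fix C assume "C \<in> {C. \<exists>j\<in>{1..m}. C = concat_conn m D1 D2 `` {Mid j} \<and> (\<forall>v\<in>C. is_mid v)}"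
    then obtain j where j: "1 \<le> j" "j \<le> m" "C = concat_conn m D1 D2 `` {Mid j}" "\<forall>v\<in>C. is_mid v" by auto
    from all j(1,2) have dd: "(\<exists>y\<in>dots m. (Mid j, outer_emb y) \<in> concat_conn m D1 D2)
               \<or> (Mid ja0, Mid j) \<in> concat_conn m D1 D2 \<or> (Mid jb1, Mid j) \<in> concat_conn m D1 D2" by blast
    from dd show "C \<in> {?C0, ?C1}"
    proof (elim disjE bexE)
      fix y assume "y \<in> dots m" "(Mid j, outer_emb y) \<in> concat_conn m D1 D2"
      then have "outer_emb y \<in> C" using j(3) by simp
      then show ?thesis using j(4) outer_not_mid by blast
    next
      assume "(Mid ja0, Mid j) \<in> concat_conn m D1 D2"
      then show ?thesis using comp_eq[OF BD] j by auto
    next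
      assume "(Mid jb1, Mid j) \<in> concat_conn m D1 D2"
      then show ?thesis using comp_eq[OF BD] j by auto
    qed
  next
    fix C assume "C \<in> {?C0, ?C1}"
    then show "C \<in> {C. \<exists>j\<in>{1..m}. C = concat_conn m D1 D2 `` {Mid j} \<and> (\<forall>v\<in>C. is_mid v)}"
      using sub0 sub1 ja0 jb1 by (auto simp: is_mid_def)
  qed
  then show ?thesis unfolding loops_def using ne by simp
qed

lemma uedge: "x \<in> dots m \<Longrightarrow> u = upper_emb x \<Longrightarrow> v = upper_emb (D1 x) \<Longrightarrow> (u, v) \<in> concat_conn m D1 D2"
  using upper_edge by blast
lemma ledge: "x \<in> dots m \<Longrightarrow> u = lower_emb x \<Longrightarrow> v = lower_emb (D2 x) \<Longrightarrow> (u, v) \<in> concat_conn m D1 D2"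
  using lower_edge by blast

lemma concat_perm:
  assumes D: "D \<in> brauer_diagrams m" and P: "P \<in> brauer_diagrams m" and s: "invol m \<sigma>"
    and hP: "\<And>k. 1 \<le> k \<Longrightarrow> k \<le> m \<Longrightarrow> P (k, True) = (\<sigma> k, False) \<and> P (k, False) = (\<sigma> k, True)"
  shows "concat m P D = relT m \<sigma> D" "loops m P D = 0"
proof -
  have sk: "\<And>k. 1 \<le> k \<Longrightarrow> k \<le> m \<Longrightarrow> 1 \<le> \<sigma> k \<and> \<sigma> k \<le> m" using s by (simp add: invol_def)
  show "concat m P D = relT m \<sigma> D"
  proof (rule concat_eqI[OF P D])
    fix x assume x: "x \<in> dots m"
    have R: "relT m \<sigma> D \<in> brauer_diagrams m" by (rule relT_BD[OF D s])
    obtain k e where ke: "x = (k, e)" by (cases x)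
    have k: "1 \<le> k" "k \<le> m" using x ke by auto
    have conn: "(outer_emb x, outer_emb (relT m \<sigma> D x)) \<in> concat_conn m P D"
    proof (cases e)
      case True
      obtain l e' where z: "D (\<sigma> k, True) = (l, e')" by (cases "D (\<sigma> k, True)")
      have l: "1 \<le> l" "l \<le> m" using BD_in[OF D, of "(\<sigma> k, True)"] sk[OF k] z by auto
      have 1: "(Top k, Mid (\<sigma> k)) \<in> concat_conn m P D"
        by (rule uedge[of "(k, True)"]) (use k hP[OF k] in auto)
      have 2: "(Mid (\<sigma> k), lower_emb (l, e')) \<in> concat_conn m P D"
        by (rule ledge[of "(\<sigma> k, True)"]) (use sk[OF k] z in auto)
      show ?thesis
      proof (cases e')
        case False
        then show ?thesis using 1 2 ke True z x conn_trans by (simp add: relT_def tT_def)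
      next
        case e': True
        have 3: "(Mid l, Top (\<sigma> l)) \<in> concat_conn m P D"
          by (rule uedge[of "(l, False)"]) (use l hP[OF l] in auto)
        show ?thesis using 1 2 3 ke True e' z x conn_trans by (simp add: relT_def tT_def)
      qed
    next
      case False
      obtain l e' where z: "D (k, False) = (l, e')" by (cases "D (k, False)")
      have l: "1 \<le> l" "l \<le> m" using BD_in[OF D, of "(k, False)"] k z by auto
      have 2: "(Bot k, lower_emb (l, e')) \<in> concat_conn m P D"
        by (rule ledge[of "(k, False)"]) (use k z in auto)
      show ?thesis
      proof (cases e')
        case e': False
        then show ?thesis using 2 ke False z x by (simp add: relT_def tT_def)
      next
        case e': True
        have 3: "(Mid l, Top (\<sigma> l)) \<in> concat_conn m P D"
          by (rule uedge[of "(l, False)"]) (use l hP[OF l] in auto)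
        show ?thesis using 2 3 ke False e' z x conn_trans by (simp add: relT_def tT_def)
      qed
    qed
    then show "relT m \<sigma> D x \<in> dots m \<and> relT m \<sigma> D x \<noteq> x \<and> (outer_emb x, outer_emb (relT m \<sigma> D x)) \<in> concat_conn m P D"
      using BD_in[OF R x] BD_ne[OF R x] by simp
  next
    fix x assume "x \<notin> dots m" then show "relT m \<sigma> D x = x" by (simp add: relT_def)
  qed
  show "loops m P D = 0"
  proof (rule loops_zero, intro allI impI)
    fix j assume j: "1 \<le> j \<and> j \<le> m"
    have "(Mid j, Top (\<sigma> j)) \<in> concat_conn m P D"
      by (rule uedge[of "(j, False)"]) (use j hP[of j] in auto)
    moreover have "(\<sigma> j, True) \<in> dots m" using sk[of j] j by auto
    ultimately show "\<exists>y\<in>dots m. (Mid j, outer_emb y) \<in> concat_conn m P D"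
      by (intro bexI[of _ "(\<sigma> j, True)"]) simp_all
  qed
qed


lemma outer_lp:
  assumes x: "x \<in> dots m" and v: "snd x \<longrightarrow> P (fst x, True) = (fst x, False)"
  shows "(outer_emb x, lower_emb x) \<in> concat_conn m P D"
proof -
  obtain k e where ke: "x = (k, e)" by (cases x)
  show ?thesis
  proof (cases e)
    case True
    then show ?thesis using ke x v by (intro uedge[of x]) auto
  next
    case False
    then show ?thesis using ke by (simp add: conn_refl)
  qed
qed

lemma ex_outerI: "(u, outer_emb y) \<in> concat_conn m P D \<Longrightarrow> y \<in> dots m \<Longrightarrow> \<exists>y\<in>dots m. (u, outer_emb y) \<in> concat_conn m P D"
  by blast

lemma capstep:
  assumes P: "P \<in> brauer_diagrams m" and D: "D \<in> brauer_diagrams m" and W: "W \<in> brauer_diagrams m"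
    and j: "1 \<le> j" "j + 1 \<le> m"
    and hyp: "\<And>x. x \<in> dots m \<Longrightarrow> x \<notin> TT \<Longrightarrow> (lower_emb x, lower_emb (W x)) \<in> concat_conn m P D"
    and nA: "(j, True) \<notin> TT" "(j + 1, True) \<notin> TT"
    and mid: "(Mid j, Mid (j + 1)) \<in> concat_conn m P D"
    and x: "x \<in> dots m" "x \<notin> TT" "x \<noteq> (j, True)" "x \<noteq> (j + 1, True)"
  shows "(lower_emb x, lower_emb (capT m j W x)) \<in> concat_conn m P D"
proof (cases "W (j, True) = (j + 1, True)")
  case True
  then show ?thesis using capT_loop[OF W j True] hyp x by simp
next
  case False
  let ?A = "(j, True)" and ?B = "(j + 1, True)"
  have A: "?A \<in> dots m" and B: "?B \<in> dots m" using j by auto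
  note v = capT_vals[OF W j False]
  have hA: "(Mid j, lower_emb (W ?A)) \<in> concat_conn m P D" using hyp[OF A nA(1)] by simp
  have hB: "(Mid (j + 1), lower_emb (W ?B)) \<in> concat_conn m P D" using hyp[OF B nA(2)] by simp
  have mid': "(Mid (j + 1), Mid j) \<in> concat_conn m P D" using conn_sym[OF P D mid] .
  have c: "x = W ?A \<or> x = W ?B \<or> x \<notin> {?A, ?B, W ?A, W ?B}" using x by blast
  then show ?thesis
  proof (elim disjE)
    assume xa: "x = W ?A"
    have h1: "(lower_emb x, Mid j) \<in> concat_conn m P D" using conn_sym[OF P D hA] xa by simp
    show ?thesis using conn_trans[OF conn_trans[OF h1 mid] hB] xa v(3) by simp
  next
    assume xb: "x = W ?B"
    have h1: "(lower_emb x, Mid (j + 1)) \<in> concat_conn m P D" using conn_sym[OF P D hB] xb by simp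
    show ?thesis using conn_trans[OF conn_trans[OF h1 mid'] hA] xb v(4) by simp
  next
    assume "x \<notin> {?A, ?B, W ?A, W ?B}"
    then show ?thesis using v(5)[OF x(1)] hyp[OF x(1,2)] by simp
  qed
qed

lemma concat_cap1:
  assumes D: "D \<in> brauer_diagrams m" and P: "P \<in> brauer_diagrams m" and j: "1 \<le> j" "j + 1 \<le> m"
    and hA: "P (j, True) = (j + 1, True)" and hAF: "P (j, False) = (j + 1, False)"
    and hk: "\<And>k. 1 \<le> k \<Longrightarrow> k \<le> m \<Longrightarrow> k \<noteq> j \<Longrightarrow> k \<noteq> j + 1 \<Longrightarrow> P (k, True) = (k, False)"
  shows "concat m P D = capT m j D" "loops m P D = (if D (j, True) = (j + 1, True) then 1 else 0)"
proof -
  let ?A = "(j, True)" and ?B = "(j + 1, True)"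
  have A: "?A \<in> dots m" and B: "?B \<in> dots m" using j by auto
  have AF: "(j, False) \<in> dots m" and BF: "(j + 1, False) \<in> dots m" using j by auto
  have hB: "P ?B = ?A" using BD_inv[OF P A] hA by simp
  have hBF: "P (j + 1, False) = (j, False)" using BD_inv[OF P AF] hAF by simp
  have hkF: "\<And>k. 1 \<le> k \<Longrightarrow> k \<le> m \<Longrightarrow> k \<noteq> j \<Longrightarrow> k \<noteq> j + 1 \<Longrightarrow> P (k, False) = (k, True)"
  proof -
    fix k assume k: "1 \<le> k" "k \<le> m" "k \<noteq> j" "k \<noteq> j + 1"
    have "(k, True) \<in> dots m" using k by simp
    from BD_inv[OF P this] show "P (k, False) = (k, True)" using hk[OF k] by simp
  qed
  have vert: "\<And>x. x \<in> dots m \<Longrightarrow> x \<noteq> ?A \<Longrightarrow> x \<noteq> ?B \<Longrightarrow> snd x \<longrightarrow> P (fst x, True) = (fst x, False)"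
  proof -
    fix x assume x: "x \<in> dots m" "x \<noteq> ?A" "x \<noteq> ?B"
    obtain k e where ke: "x = (k, e)" by (cases x)
    show "snd x \<longrightarrow> P (fst x, True) = (fst x, False)"
      using x ke hk[of k] by (cases e) auto
  qed
  have mid: "(Mid j, Mid (j + 1)) \<in> concat_conn m P D"
    by (rule uedge[of "(j, False)"]) (use AF hAF in auto)
  have mid': "(Mid (j + 1), Mid j) \<in> concat_conn m P D"
    by (rule uedge[of "(j + 1, False)"]) (use BF hBF in auto)
  have C: "capT m j D \<in> brauer_diagrams m" using capT_BD[OF D j] .
  have step: "\<And>x. x \<in> dots m \<Longrightarrow> x \<noteq> ?A \<Longrightarrow> x \<noteq> ?B \<Longrightarrow>
      (lower_emb x, lower_emb (capT m j D x)) \<in> concat_conn m P D"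
  proof -
    fix x assume x: "x \<in> dots m" "x \<noteq> ?A" "x \<noteq> ?B"
    show "(lower_emb x, lower_emb (capT m j D x)) \<in> concat_conn m P D"
      by (rule capstep[OF P D D j, where TT = "{}"]) (use mid lower_edge x in simp_all)
  qed
  show "concat m P D = capT m j D"
  proof (rule concat_eqI[OF P D])
    fix x assume x: "x \<in> dots m"
    have "(outer_emb x, outer_emb (capT m j D x)) \<in> concat_conn m P D"
    proof -
      have c: "x = ?A \<or> x = ?B \<or> (x \<noteq> ?A \<and> x \<noteq> ?B)" by blast
      then show ?thesis
      proof (elim disjE conjE)
        assume "x = ?A" then show ?thesis using A hA by (auto simp: capT_def intro: uedge[of ?A])
      next
        assume "x = ?B" then show ?thesis using B hB by (auto simp: capT_def intro: uedge[of ?B])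
      next
        assume xa: "x \<noteq> ?A" and xb: "x \<noteq> ?B"
        let ?y = "capT m j D x"
        have y: "?y \<in> dots m" using BD_in[OF C x] .
        have yi: "capT m j D ?y = x" using BD_inv[OF C x] .
        have ya: "?y \<noteq> ?A"
        proof assume "?y = ?A" then have "x = capT m j D ?A" using yi by simp
          then show False using xb A by (simp add: capT_def) qed
        have yb: "?y \<noteq> ?B"
        proof assume "?y = ?B" then have "x = capT m j D ?B" using yi by simp
          then show False using xa B by (simp add: capT_def) qed
        have 1: "(outer_emb x, lower_emb x) \<in> concat_conn m P D" using outer_lp[where P=P and D=D, OF x vert[OF x xa xb]] .
        have 3: "(lower_emb ?y, outer_emb ?y) \<in> concat_conn m P D"
          using conn_sym[OF P D outer_lp[where P=P and D=D, OF y vert[OF y ya yb]]] .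
        show ?thesis using 1 step[OF x xa xb] 3 conn_trans by metis
      qed
    qed
    then show "capT m j D x \<in> dots m \<and> capT m j D x \<noteq> x \<and> (outer_emb x, outer_emb (capT m j D x)) \<in> concat_conn m P D"
      using BD_in[OF C x] BD_ne[OF C x] by simp
  next
    fix x assume "x \<notin> dots m" then show "capT m j D x = x" by (simp add: capT_def)
  qed
  have topk: "\<And>k. 1 \<le> k \<Longrightarrow> k \<le> m \<Longrightarrow> k \<noteq> j \<Longrightarrow> k \<noteq> j + 1 \<Longrightarrow>
      \<exists>y\<in>dots m. (Mid k, outer_emb y) \<in> concat_conn m P D"
  proof -
    fix k assume k: "1 \<le> k" "k \<le> m" "k \<noteq> j" "k \<noteq> j + 1"
    have "(Mid k, Top k) \<in> concat_conn m P D"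
      by (rule uedge[of "(k, False)"]) (use k hkF[OF k] in auto)
    then show "\<exists>y\<in>dots m. (Mid k, outer_emb y) \<in> concat_conn m P D"
      using k by (intro bexI[of _ "(k, True)"]) simp_all
  qed
  show "loops m P D = (if D (j, True) = (j + 1, True) then 1 else 0)"
  proof (cases "D ?A = ?B")
    case True
    have DB: "D ?B = ?A" using BD_inv[OF D A] True by simp
    have "loops m P D = 1"
    proof (rule loops_one[OF P D j(1) _ _, where KA = "{j, j + 1}"])
      show "j \<le> m" using j by simp
      show "j \<in> {j, j + 1}" by simp
      show "\<forall>k\<in>{j, j + 1}. upper_emb (P (k, False)) \<in> Mid ` {j, j + 1} \<and> lower_emb (D (k, True)) \<in> Mid ` {j, j + 1}"
        using hAF hBF True DB by auto
      show "\<forall>ja. 1 \<le> ja \<and> ja \<le> m \<longrightarrow> (\<exists>y\<in>dots m. (Mid ja, outer_emb y) \<in> concat_conn m P D) \<or>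
           (Mid j, Mid ja) \<in> concat_conn m P D"
        using topk mid conn_refl by blast
    qed
    then show ?thesis using True by simp
  next
    case False
    have mj: "\<exists>y\<in>dots m. (Mid j, outer_emb y) \<in> concat_conn m P D"
    proof -
      let ?z = "D ?A"
      have z: "?z \<in> dots m" "?z \<noteq> ?A" using BD_in[OF D A] BD_ne[OF D A] by auto
      have 1: "(Mid j, lower_emb ?z) \<in> concat_conn m P D" using ledge[of ?A] A by auto
      have 2: "(lower_emb ?z, outer_emb ?z) \<in> concat_conn m P D"
        using conn_sym[OF P D outer_lp[where P=P and D=D, OF z(1) vert[OF z(1) z(2) False]]] .
      show ?thesis using conn_trans[OF 1 2] z(1) by blast
    qed
    have "loops m P D = 0"
    proof (rule loops_zero, intro allI impI)
      fix k assume k: "1 \<le> k \<and> k \<le> m"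
      show "\<exists>y\<in>dots m. (Mid k, outer_emb y) \<in> concat_conn m P D"
      proof (cases "k = j \<or> k = j + 1")
        case True
        then show ?thesis using mj mid' conn_trans by blast
      next
        case False then show ?thesis using topk k by blast
      qed
    qed
    then show ?thesis using False by simp
  qed
qed

lemma capT_other:
  "x \<in> dots m \<Longrightarrow> x \<noteq> (j, True) \<Longrightarrow> x \<noteq> (j + 1, True) \<Longrightarrow> x \<noteq> W (j, True) \<Longrightarrow> x \<noteq> W (j + 1, True)
   \<Longrightarrow> capT m j W x = W x"
  by (simp add: capT_def)

lemma concat_cap2:
  assumes D: "D \<in> brauer_diagrams m" and P: "P \<in> brauer_diagrams m"
    and ab: "1 \<le> a" "a + 1 < b" "b + 1 \<le> m"
    and haT: "P (a, True) = (a + 1, True)" and haF: "P (a, False) = (a + 1, False)"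
    and hbT: "P (b, True) = (b + 1, True)" and hbF: "P (b, False) = (b + 1, False)"
    and hk: "\<And>k. 1 \<le> k \<Longrightarrow> k \<le> m \<Longrightarrow> k \<noteq> a \<Longrightarrow> k \<noteq> a + 1 \<Longrightarrow> k \<noteq> b \<Longrightarrow> k \<noteq> b + 1 \<Longrightarrow> P (k, True) = (k, False)"
  shows "concat m P D = capT m a (capT m b D)"
    "loops m P D = (if D (b, True) = (b + 1, True) then 1 else 0) + (if capT m b D (a, True) = (a + 1, True) then 1 else 0)"
proof -
  let ?A = "(a, True)" and ?A' = "(a + 1, True)" and ?B = "(b, True)" and ?B' = "(b + 1, True)"
  have ja: "1 \<le> a" "a + 1 \<le> m" and jb: "1 \<le> b" "b + 1 \<le> m" using ab by auto
  have A: "?A \<in> dots m" and A': "?A' \<in> dots m" and B: "?B \<in> dots m" and B': "?B' \<in> dots m" using ab by auto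
  have AF: "(a, False) \<in> dots m" and A'F: "(a + 1, False) \<in> dots m"
    and BF: "(b, False) \<in> dots m" and B'F: "(b + 1, False) \<in> dots m" using ab by auto
  have haT': "P ?A' = ?A" using BD_inv[OF P A] haT by simp
  have haF': "P (a + 1, False) = (a, False)" using BD_inv[OF P AF] haF by simp
  have hbT': "P ?B' = ?B" using BD_inv[OF P B] hbT by simp
  have hbF': "P (b + 1, False) = (b, False)" using BD_inv[OF P BF] hbF by simp
  have hkF: "\<And>k. 1 \<le> k \<Longrightarrow> k \<le> m \<Longrightarrow> k \<noteq> a \<Longrightarrow> k \<noteq> a + 1 \<Longrightarrow> k \<noteq> b \<Longrightarrow> k \<noteq> b + 1 \<Longrightarrow> P (k, False) = (k, True)"
  proof -
    fix k assume k: "1 \<le> k" "k \<le> m" "k \<noteq> a" "k \<noteq> a + 1" "k \<noteq> b" "k \<noteq> b + 1"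
    have "(k, True) \<in> dots m" using k by simp
    from BD_inv[OF P this] show "P (k, False) = (k, True)" using hk[OF k] by simp
  qed
  let ?tops = "{?A, ?A', ?B, ?B'}"
  have vert: "\<And>x. x \<in> dots m \<Longrightarrow> x \<notin> ?tops \<Longrightarrow> snd x \<longrightarrow> P (fst x, True) = (fst x, False)"
  proof -
    fix x assume x: "x \<in> dots m" "x \<notin> ?tops"
    obtain k e where ke: "x = (k, e)" by (cases x)
    show "snd x \<longrightarrow> P (fst x, True) = (fst x, False)"
      using x ke hk[of k] by (cases e) auto
  qed
  have reach: "\<And>z. z \<in> dots m \<Longrightarrow> z \<notin> ?tops \<Longrightarrow> (lower_emb z, outer_emb z) \<in> concat_conn m P D"
    using conn_sym[OF P D outer_lp[where P=P and D=D, OF _ vert]] by blast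
  have reach': "\<And>z. z \<in> dots m \<Longrightarrow> z \<notin> ?tops \<Longrightarrow> (outer_emb z, lower_emb z) \<in> concat_conn m P D"
    using outer_lp[where P=P and D=D, OF _ vert] by blast
  have exo: "\<And>u z. (u, lower_emb z) \<in> concat_conn m P D \<Longrightarrow> z \<in> dots m \<Longrightarrow> z \<notin> ?tops \<Longrightarrow>
      \<exists>y\<in>dots m. (u, outer_emb y) \<in> concat_conn m P D"
    using reach conn_trans by blast
  have midA: "(Mid a, Mid (a + 1)) \<in> concat_conn m P D"
    by (rule uedge[of "(a, False)"]) (use AF haF in auto)
  have midA': "(Mid (a + 1), Mid a) \<in> concat_conn m P D"
    by (rule uedge[of "(a + 1, False)"]) (use A'F haF' in auto)
  have midB: "(Mid b, Mid (b + 1)) \<in> concat_conn m P D"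
    by (rule uedge[of "(b, False)"]) (use BF hbF in auto)
  have midB': "(Mid (b + 1), Mid b) \<in> concat_conn m P D"
    by (rule uedge[of "(b + 1, False)"]) (use B'F hbF' in auto)
  have neq: "?A \<noteq> ?A'" "?A \<noteq> ?B" "?A \<noteq> ?B'" "?A' \<noteq> ?B" "?A' \<noteq> ?B'" "?B \<noteq> ?B'" using ab by auto
  let ?Y = "capT m b D"
  let ?Z = "capT m a ?Y"
  have Y: "?Y \<in> brauer_diagrams m" using capT_BD[OF D jb] .
  have Z: "?Z \<in> brauer_diagrams m" using capT_BD[OF Y ja] .
  have YB: "?Y ?B = ?B'" "?Y ?B' = ?B" using jb by (simp_all add: capT_def)
  have ZA: "?Z ?A = ?A'" "?Z ?A' = ?A" using ja by (simp_all add: capT_def)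
  have YA: "?Y ?A \<noteq> ?B" "?Y ?A \<noteq> ?B'" "?Y ?A' \<noteq> ?B" "?Y ?A' \<noteq> ?B'"
    using BD_inv[OF Y A] BD_inv[OF Y A'] YB ab by auto
  have "?Z ?B = ?Y ?B" by (rule capT_other[OF B]) (use ab YA in auto)
  moreover have "?Z ?B' = ?Y ?B'" by (rule capT_other[OF B']) (use ab YA in auto)
  ultimately have ZB: "?Z ?B = ?B'" "?Z ?B' = ?B" using YB by simp_all
  have C1: "\<And>x. x \<in> dots m \<Longrightarrow> x \<noteq> ?B \<Longrightarrow> x \<noteq> ?B' \<Longrightarrow>
      (lower_emb x, lower_emb (?Y x)) \<in> concat_conn m P D"
  proof -
    fix x assume x: "x \<in> dots m" "x \<noteq> ?B" "x \<noteq> ?B'"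
    show "(lower_emb x, lower_emb (?Y x)) \<in> concat_conn m P D"
      by (rule capstep[OF P D D jb, where TT = "{}"]) (use midB lower_edge x in simp_all)
  qed
  have C2: "\<And>x. x \<in> dots m \<Longrightarrow> x \<notin> ?tops \<Longrightarrow>
      (lower_emb x, lower_emb (?Z x)) \<in> concat_conn m P D"
  proof -
    fix x assume x: "x \<in> dots m" "x \<notin> ?tops"
    show "(lower_emb x, lower_emb (?Z x)) \<in> concat_conn m P D"
      by (rule capstep[OF P D Y ja, where TT = "{?B, ?B'}"]) (use midA C1 x ab in auto)
  qed
  show "concat m P D = ?Z"
  proof (rule concat_eqI[OF P D])
    fix x assume x: "x \<in> dots m"
    have "(outer_emb x, outer_emb (?Z x)) \<in> concat_conn m P D"
    proof (cases "x \<in> ?tops")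
      case True
      then show ?thesis
      proof (elim insertE emptyE)
        assume "x = ?A" then show ?thesis using ZA A haT by (auto intro: uedge[of ?A])
      next
        assume "x = ?A'" then show ?thesis using ZA A' haT' by (auto intro: uedge[of ?A'])
      next
        assume "x = ?B" then show ?thesis using ZB B hbT by (auto intro: uedge[of ?B])
      next
        assume "x = ?B'" then show ?thesis using ZB B' hbT' by (auto intro: uedge[of ?B'])
      qed
    next
      case False
      let ?y = "?Z x"
      have y: "?y \<in> dots m" using BD_in[OF Z x] .
      have yi: "?Z ?y = x" using BD_inv[OF Z x] .
      have yt: "?y \<notin> ?tops"
      proof
        assume "?y \<in> ?tops"
        then have "?Z ?y \<in> ?tops" using ZA ZB by auto
        then show False using yi False by simp
      qed
      show ?thesis using conn_trans[OF conn_trans[OF reach'[OF x False] C2[OF x False]] reach[OF y yt]] .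
    qed
    then show "?Z x \<in> dots m \<and> ?Z x \<noteq> x \<and> (outer_emb x, outer_emb (?Z x)) \<in> concat_conn m P D"
      using BD_in[OF Z x] BD_ne[OF Z x] by simp
  next
    fix x assume "x \<notin> dots m" then show "?Z x = x" by (simp add: capT_def)
  qed
  have topk: "\<And>k. 1 \<le> k \<Longrightarrow> k \<le> m \<Longrightarrow> k \<noteq> a \<Longrightarrow> k \<noteq> a + 1 \<Longrightarrow> k \<noteq> b \<Longrightarrow> k \<noteq> b + 1 \<Longrightarrow>
      \<exists>y\<in>dots m. (Mid k, outer_emb y) \<in> concat_conn m P D"
  proof -
    fix k assume k: "1 \<le> k" "k \<le> m" "k \<noteq> a" "k \<noteq> a + 1" "k \<noteq> b" "k \<noteq> b + 1"
    have "(Mid k, Top k) \<in> concat_conn m P D"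
      by (rule uedge[of "(k, False)"]) (use k hkF[OF k] in auto)
    then show "\<exists>y\<in>dots m. (Mid k, outer_emb y) \<in> concat_conn m P D"
      using k by (intro bexI[of _ "(k, True)"]) simp_all
  qed
  have lA: "(Mid a, lower_emb (D ?A)) \<in> concat_conn m P D" using lower_edge[OF A] by simp
  have lA': "(Mid (a + 1), lower_emb (D ?A')) \<in> concat_conn m P D" using lower_edge[OF A'] by simp
  have lB: "(Mid b, lower_emb (D ?B)) \<in> concat_conn m P D" using lower_edge[OF B] by simp
  have lB': "(Mid (b + 1), lower_emb (D ?B')) \<in> concat_conn m P D" using lower_edge[OF B'] by simp
  have dA: "D ?A \<in> dots m" "D ?A \<noteq> ?A" "D (D ?A) = ?A" using BD_in[OF D A] BD_ne[OF D A] BD_inv[OF D A] by auto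
  have dA': "D ?A' \<in> dots m" "D ?A' \<noteq> ?A'" "D (D ?A') = ?A'" using BD_in[OF D A'] BD_ne[OF D A'] BD_inv[OF D A'] by auto
  have dB: "D ?B \<in> dots m" "D ?B \<noteq> ?B" "D (D ?B) = ?B" using BD_in[OF D B] BD_ne[OF D B] BD_inv[OF D B] by auto
  have dB': "D ?B' \<in> dots m" "D ?B' \<noteq> ?B'" "D (D ?B') = ?B'" using BD_in[OF D B'] BD_ne[OF D B'] BD_inv[OF D B'] by auto
  show "loops m P D = (if D ?B = ?B' then 1 else 0) + (if ?Y ?A = ?A' then 1 else 0)"
  proof (cases "D ?B = ?B'")
    case cb: True
    have YD: "?Y = D" using capT_loop[OF D jb cb] .
    have DB': "D ?B' = ?B" using dB cb by simp
    show ?thesis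
    proof (cases "D ?A = ?A'")
      case ca: True
      have DA': "D ?A' = ?A" using dA ca by simp
      have "loops m P D = 2"
      proof (rule loops_two[OF P D ja(1) _ _ _ jb(1) _ _ _ _, where KA = "{a, a + 1}" and KB = "{b, b + 1}"])
        show "a \<le> m" "b \<le> m" "a \<in> {a, a + 1}" "b \<in> {b, b + 1}" "b \<notin> {a, a + 1}" using ab by auto
        show "\<forall>k\<in>{a, a + 1}. upper_emb (P (k, False)) \<in> Mid ` {a, a + 1} \<and> lower_emb (D (k, True)) \<in> Mid ` {a, a + 1}"
          using haF haF' ca DA' by auto
        show "\<forall>k\<in>{b, b + 1}. upper_emb (P (k, False)) \<in> Mid ` {b, b + 1} \<and> lower_emb (D (k, True)) \<in> Mid ` {b, b + 1}"
          using hbF hbF' cb DB' by auto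
        show "\<forall>j. 1 \<le> j \<and> j \<le> m \<longrightarrow> (\<exists>y\<in>dots m. (Mid j, outer_emb y) \<in> concat_conn m P D) \<or>
            (Mid a, Mid j) \<in> concat_conn m P D \<or> (Mid b, Mid j) \<in> concat_conn m P D"
          using topk midA midB conn_refl by blast
      qed
      then show ?thesis using ca cb YD by simp
    next
      case ca: False
      have ma: "\<exists>y\<in>dots m. (Mid a, outer_emb y) \<in> concat_conn m P D"
      proof (rule exo[OF lA dA(1)])
        show "D ?A \<notin> ?tops" using ca dA cb DB' neq by auto
      qed
      have "loops m P D = 1"
      proof (rule loops_one[OF P D jb(1) _ _ _, where KA = "{b, b + 1}"])
        show "b \<le> m" "b \<in> {b, b + 1}" using ab by auto
        show "\<forall>k\<in>{b, b + 1}. upper_emb (P (k, False)) \<in> Mid ` {b, b + 1} \<and> lower_emb (D (k, True)) \<in> Mid ` {b, b + 1}"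
          using hbF hbF' cb DB' by auto
        show "\<forall>j. 1 \<le> j \<and> j \<le> m \<longrightarrow> (\<exists>y\<in>dots m. (Mid j, outer_emb y) \<in> concat_conn m P D) \<or>
            (Mid b, Mid j) \<in> concat_conn m P D"
          using topk ma midA' midB conn_refl conn_trans by blast
      qed
      then show ?thesis using ca cb YD by simp
    qed
  next
    case cb: False
    note v = capT_vals[OF D jb cb]
    let ?c = "D ?B" and ?c' = "D ?B'"
    have mb_to: "(Mid b, lower_emb ?c) \<in> concat_conn m P D" using lB .
    show ?thesis
    proof (cases "?Y ?A = ?A'")
      case ya: False
      have yA: "?Y ?A \<in> dots m" "?Y ?A \<noteq> ?A" using BD_in[OF Y A] BD_ne[OF Y A] by auto
      have yt: "?Y ?A \<notin> ?tops" using yA ya YA by auto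
      have ma: "\<exists>y\<in>dots m. (Mid a, outer_emb y) \<in> concat_conn m P D"
        using exo[OF C1[OF A neq(2) neq(3)] yA(1) yt] by simp
      have ma': "\<exists>y\<in>dots m. (Mid (a + 1), outer_emb y) \<in> concat_conn m P D"
        using ma midA' conn_trans by blast
      have mb: "\<exists>y\<in>dots m. (Mid b, outer_emb y) \<in> concat_conn m P D"
      proof (cases "?c \<in> {?A, ?A'}")
        case True
        then have "(Mid b, Mid a) \<in> concat_conn m P D \<or> (Mid b, Mid (a + 1)) \<in> concat_conn m P D"
          using lB by auto
        then show ?thesis
        proof
          assume h: "(Mid b, Mid a) \<in> concat_conn m P D"
          from ma obtain y where "y \<in> dots m" "(Mid a, outer_emb y) \<in> concat_conn m P D" by blast
          then show ?thesis using conn_trans[OF h] by blast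
        next
          assume h: "(Mid b, Mid (a + 1)) \<in> concat_conn m P D"
          from ma' obtain y where "y \<in> dots m" "(Mid (a + 1), outer_emb y) \<in> concat_conn m P D" by blast
          then show ?thesis using conn_trans[OF h] by blast
        qed
      next
        case False
        then show ?thesis using exo[OF lB dB(1)] dB(2) cb by auto
      qed
      have "loops m P D = 0"
        by (rule loops_zero) (use topk ma ma' mb midB' conn_trans in blast)
      then show ?thesis using cb ya by simp
    next
      case ya: True
      have "loops m P D = 1"
      proof (cases "?c \<in> {?A, ?A'}")
        case cin: True
        have cases2: "(?c = ?A \<and> ?c' = ?A') \<or> (?c = ?A' \<and> ?c' = ?A)"
        proof (cases "?c = ?A")
          case True
          then show ?thesis using ya v(3) by simp
        next
          case False
          then have cA': "?c = ?A'" using cin by simp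
          show ?thesis
          proof (cases "?A = ?c'")
            case True then show ?thesis using cA' by simp
          next
            case False
            have "?Y ?A = D ?A" using v(5)[OF A] False cA' neq by auto
            then have "D ?A = ?A'" using ya by simp
            then have "D ?A' = ?A" using dA by simp
            then show ?thesis using cA' dB by simp
          qed
        qed
        have DAs: "lower_emb (D ?A) \<in> Mid ` {a, a + 1, b, b + 1}" "lower_emb (D ?A') \<in> Mid ` {a, a + 1, b, b + 1}"
          using cases2 dB dB' by auto
        have DBs: "lower_emb (D ?B) \<in> Mid ` {a, a + 1, b, b + 1}" "lower_emb (D ?B') \<in> Mid ` {a, a + 1, b, b + 1}"
          using cases2 by auto
        have bA: "(Mid b, Mid a) \<in> concat_conn m P D"
          using cases2 lB midA' conn_trans by auto
        show ?thesis
        proof (rule loops_one[OF P D ja(1) _ _ _, where KA = "{a, a + 1, b, b + 1}"])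
          show "a \<le> m" "a \<in> {a, a + 1, b, b + 1}" using ab by auto
          show "\<forall>k\<in>{a, a + 1, b, b + 1}. upper_emb (P (k, False)) \<in> Mid ` {a, a + 1, b, b + 1} \<and>
              lower_emb (D (k, True)) \<in> Mid ` {a, a + 1, b, b + 1}"
            using haF haF' hbF hbF' DAs DBs by auto
          have ab': "(Mid a, Mid b) \<in> concat_conn m P D" using conn_sym[OF P D bA] .
          show "\<forall>j. 1 \<le> j \<and> j \<le> m \<longrightarrow> (\<exists>y\<in>dots m. (Mid j, outer_emb y) \<in> concat_conn m P D) \<or>
              (Mid a, Mid j) \<in> concat_conn m P D"
            using topk midA ab' midB conn_refl conn_trans by blast
        qed
      next
        case cout: False
        have nA: "?A \<noteq> ?c'"
        proof
          assume "?A = ?c'"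
          then have "?Y ?A = ?c" using v(4) by simp
          then show False using ya cout by simp
        qed
        have DA: "D ?A = ?A'" using v(5)[OF A] nA cout neq ya by auto
        have DA': "D ?A' = ?A" using dA DA by simp
        have mb: "\<exists>y\<in>dots m. (Mid b, outer_emb y) \<in> concat_conn m P D"
          using exo[OF lB dB(1)] dB(2) cb cout by auto
        show ?thesis
        proof (rule loops_one[OF P D ja(1) _ _ _, where KA = "{a, a + 1}"])
          show "a \<le> m" "a \<in> {a, a + 1}" using ab by auto
          show "\<forall>k\<in>{a, a + 1}. upper_emb (P (k, False)) \<in> Mid ` {a, a + 1} \<and> lower_emb (D (k, True)) \<in> Mid ` {a, a + 1}"
            using haF haF' DA DA' by auto
          show "\<forall>j. 1 \<le> j \<and> j \<le> m \<longrightarrow> (\<exists>y\<in>dots m. (Mid j, outer_emb y) \<in> concat_conn m P D) \<or>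
              (Mid a, Mid j) \<in> concat_conn m P D"
            using topk midA mb midB' conn_refl conn_trans by blast
        qed
      qed
      then show ?thesis using cb ya by simp
    qed
  qed
qed

definition sw :: "nat \<Rightarrow> nat \<Rightarrow> nat" where
  "sw j k = (if k = j then j + 1 else if k = j + 1 then j else k)"

definition sig :: "nat \<Rightarrow> nat \<Rightarrow> nat \<Rightarrow> nat" where
  "sig n i = (if i = 0 then sw n else sw (n - i) \<circ> sw (n + i))"

definition permD :: "nat \<Rightarrow> (nat \<Rightarrow> nat) \<Rightarrow> diagram" where
  "permD m \<sigma> = (\<lambda>x. if x \<in> dots m then (\<sigma> (fst x), \<not> snd x) else x)"

fun act :: "nat \<Rightarrow> Cgen \<Rightarrow> diagram \<Rightarrow> diagram" where
  "act n (gr i) D = relT (2 * n) (sig n i) D"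
| "act n (ge i) D = (if i = 0 then capT (2 * n) n D else capT (2 * n) (n - i) (capT (2 * n) (n + i) D))"

fun lcnt :: "nat \<Rightarrow> Cgen \<Rightarrow> diagram \<Rightarrow> nat" where
  "lcnt n (gr i) D = 0"
| "lcnt n (ge i) D = (if i = 0 then (if D (n, True) = (n + 1, True) then 1 else 0)
     else (if D (n + i, True) = (n + i + 1, True) then 1 else 0)
        + (if capT (2 * n) (n + i) D (n - i, True) = (n - i + 1, True) then 1 else 0))"

fun evalD :: "nat \<Rightarrow> Cgen list \<Rightarrow> diagram" where
  "evalD n [] = id_diag (2 * n)"
| "evalD n (g # w) = act n g (evalD n w)"

fun evalL :: "nat \<Rightarrow> Cgen list \<Rightarrow> nat" where
  "evalL n [] = 0"
| "evalL n (g # w) = lcnt n g (evalD n w) + evalL n w"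

fun gidx :: "Cgen \<Rightarrow> nat" where
  "gidx (gr i) = i" | "gidx (ge i) = i"

lemma id_BD: "id_diag m \<in> brauer_diagrams m"
  unfolding BD_iff id_diag_def by auto

lemma sw_invol: "1 \<le> j \<Longrightarrow> j + 1 \<le> m \<Longrightarrow> invol m (sw j)"
  by (auto simp: invol_def sw_def)

lemma sig_invol: "2 \<le> n \<Longrightarrow> i < n \<Longrightarrow> invol (2 * n) (sig n i)"
  by (auto simp: invol_def sig_def sw_def)

lemma permD_BD: assumes s: "invol m \<sigma>" shows "permD m \<sigma> \<in> brauer_diagrams m"
  unfolding BD_iff
proof (intro conjI ballI allI impI)
  fix x assume x: "x \<in> dots m"
  obtain k e where ke: "x = (k, e)" by (cases x)
  have k: "1 \<le> k" "k \<le> m" using x ke by auto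
  have sk: "1 \<le> \<sigma> k" "\<sigma> k \<le> m" "\<sigma> (\<sigma> k) = k" using s k by (auto simp: invol_def)
  show "permD m \<sigma> x \<in> dots m" using ke k sk by (simp add: permD_def)
  show "permD m \<sigma> x \<noteq> x" using ke k by (simp add: permD_def)
  show "permD m \<sigma> (permD m \<sigma> x) = x" using ke k sk by (simp add: permD_def)
next
  fix x assume "x \<notin> dots m" then show "permD m \<sigma> x = x" by (simp add: permD_def)
qed

lemma permD_vals: "1 \<le> k \<Longrightarrow> k \<le> m \<Longrightarrow> permD m \<sigma> (k, True) = (\<sigma> k, False) \<and> permD m \<sigma> (k, False) = (\<sigma> k, True)"
  by (simp add: permD_def)

lemma R_permD: "R_diag m j = permD m (sw j)"
  by (auto simp: R_diag_def permD_def sw_def fun_eq_iff)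

lemma E_capT: "1 \<le> j \<Longrightarrow> j + 1 \<le> m \<Longrightarrow> E_diag m j = capT m j (id_diag m)"
  by (auto simp: E_diag_def capT_def id_diag_def fun_eq_iff)

lemma sw_comm: "a + 1 < b \<Longrightarrow> sw a (sw b k) = sw b (sw a k)"
  by (simp add: sw_def)

lemma sw_range: "1 \<le> j \<Longrightarrow> j + 1 \<le> m \<Longrightarrow> 1 \<le> k \<Longrightarrow> k \<le> m \<Longrightarrow> 1 \<le> sw j k \<and> sw j k \<le> m"
  by (simp add: sw_def)

lemma relT_sw_permD:
  assumes n: "2 \<le> n" and i: "0 < i" "i < n"
  shows "relT (2 * n) (sw (n - i)) (permD (2 * n) (sw (n + i))) = permD (2 * n) (sig n i)"
proof
  fix x :: dot
  obtain k e where ke: "x = (k, e)" by (cases x)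
  show "relT (2 * n) (sw (n - i)) (permD (2 * n) (sw (n + i))) x = permD (2 * n) (sig n i) x"
  proof (cases "x \<in> dots (2 * n)")
    case False then show ?thesis by (simp add: relT_def permD_def)
  next
    case True
    have k: "1 \<le> k" "k \<le> 2 * n" using True ke by auto
    have r: "1 \<le> sw (n - i) k \<and> sw (n - i) k \<le> 2 * n" using sw_range[of "n - i" "2 * n" k] k n i by simp
    have c: "sw (n + i) (sw (n - i) k) = sw (n - i) (sw (n + i) k)" using sw_comm[of "n - i" "n + i" k] n i by simp
    show ?thesis using ke k r c i by (cases e) (simp_all add: relT_def permD_def tT_def sig_def)
  qed
qed

definition Pg :: "nat \<Rightarrow> Cgen \<Rightarrow> diagram" where
  "Pg n g = (case g of gr i \<Rightarrow> permD (2 * n) (sig n i) | ge i \<Rightarrow> act n (ge i) (id_diag (2 * n)))"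

lemma Pg_BD: "2 \<le> n \<Longrightarrow> gidx g < n \<Longrightarrow> Pg n g \<in> brauer_diagrams (2 * n)"
  by (cases g) (auto simp: Pg_def permD_BD sig_invol id_BD intro!: capT_BD)

lemma phiC_Pg:
  assumes n: "2 \<le> n" and g: "gidx g < n"
  shows "phiC n \<delta> g = br_smult 1 (br_basis (Pg n g))"
proof (cases g)
  case (gr i)
  show ?thesis
  proof (cases "i = 0")
    case True
    then show ?thesis using gr by (simp add: Pg_def R_permD sig_def basis_smult1[symmetric])
  next
    case False
    have i: "0 < i" "i < n" using False g gr by auto
    have s1: "invol (2 * n) (sw (n - i))" "invol (2 * n) (sw (n + i))" using i n by (auto intro!: sw_invol)
    have P1: "permD (2 * n) (sw (n - i)) \<in> brauer_diagrams (2 * n)" using permD_BD[OF s1(1)] .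
    have P2: "permD (2 * n) (sw (n + i)) \<in> brauer_diagrams (2 * n)" using permD_BD[OF s1(2)] .
    have cp: "concat (2 * n) (permD (2 * n) (sw (n - i))) (permD (2 * n) (sw (n + i))) = relT (2 * n) (sw (n - i)) (permD (2 * n) (sw (n + i)))"
         "loops (2 * n) (permD (2 * n) (sw (n - i))) (permD (2 * n) (sw (n + i))) = 0"
      using concat_perm[OF P2 P1 s1(1) permD_vals] by auto
    show ?thesis using gr False br_mult_basis[OF P1 P2, of \<delta> 1 1] cp relT_sw_permD[OF n i(1) i(2)]
      by (simp add: Pg_def R_permD basis_smult1[symmetric])
  qed
next
  case (ge i)
  show ?thesis
  proof (cases "i = 0")
    case True
    then show ?thesis using ge n by (simp add: Pg_def E_capT basis_smult1[symmetric])
  next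
    case False
    have i: "0 < i" "i < n" using False g ge by auto
    let ?m = "2 * n"
    have j1: "1 \<le> n - i" "n - i + 1 \<le> ?m" and j2: "1 \<le> n + i" "n + i + 1 \<le> ?m" using i n by auto
    have P1: "E_diag ?m (n - i) \<in> brauer_diagrams ?m" using E_capT[OF j1] capT_BD[OF id_BD j1] by simp
    have P2: "E_diag ?m (n + i) \<in> brauer_diagrams ?m" using E_capT[OF j2] capT_BD[OF id_BD j2] by simp
    have cp: "concat ?m (E_diag ?m (n - i)) (E_diag ?m (n + i)) = capT ?m (n - i) (E_diag ?m (n + i))"
         "loops ?m (E_diag ?m (n - i)) (E_diag ?m (n + i)) = (if E_diag ?m (n + i) (n - i, True) = (n - i + 1, True) then 1 else 0)"
      by (rule concat_cap1[OF P2 P1 j1]; (use i n in \<open>auto simp: E_diag_def\<close>))+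
    have z: "E_diag ?m (n + i) (n - i, True) \<noteq> (n - i + 1, True)" using i n by (auto simp: E_diag_def)
    show ?thesis using ge False br_mult_basis[OF P1 P2, of \<delta> 1 1] cp z E_capT[OF j2]
      by (simp add: Pg_def E_capT basis_smult1[symmetric])
  qed
qed

lemma act_Pg:
  assumes n: "2 \<le> n" and g: "gidx g < n" and D: "D \<in> brauer_diagrams (2 * n)"
  shows "concat (2 * n) (Pg n g) D = act n g D \<and> loops (2 * n) (Pg n g) D = lcnt n g D"
proof (cases g)
  case (gr i)
  have s: "invol (2 * n) (sig n i)" using sig_invol n g gr by simp
  show ?thesis using concat_perm[OF D permD_BD[OF s] s permD_vals] gr by (simp add: Pg_def)
next
  case (ge i)
  let ?m = "2 * n"
  show ?thesis
  proof (cases "i = 0")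
    case True
    have j: "1 \<le> n" "n + 1 \<le> ?m" using n by auto
    have P: "capT ?m n (id_diag ?m) \<in> brauer_diagrams ?m" using capT_BD[OF id_BD j] .
    have P': "E_diag ?m n \<in> brauer_diagrams ?m" using P E_capT[OF j] by simp
    have "concat ?m (E_diag ?m n) D = capT ?m n D \<and> loops ?m (E_diag ?m n) D = (if D (n, True) = (n + 1, True) then 1 else 0)"
      by (rule conjI; rule concat_cap1[OF D P' j]) (use j in \<open>simp_all add: E_diag_def\<close>)
    then show ?thesis using ge True E_capT[OF j] by (simp add: Pg_def)
  next
    case False
    have i: "0 < i" "i < n" using False g ge by auto
    have j1: "1 \<le> n - i" "n - i + 1 \<le> ?m" and j2: "1 \<le> n + i" "n + i + 1 \<le> ?m" using i n by auto
    have P: "capT ?m (n - i) (capT ?m (n + i) (id_diag ?m)) \<in> brauer_diagrams ?m"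
      using capT_BD[OF capT_BD[OF id_BD j2] j1] .
    have ab: "1 \<le> n - i" "n - i + 1 < n + i" "n + i + 1 \<le> ?m" using i n by auto
    let ?P = "capT ?m (n - i) (E_diag ?m (n + i))"
    have P': "?P \<in> brauer_diagrams ?m" using P E_capT[OF j2] by simp
    have h1: "?P (n - i, True) = (n - i + 1, True)" using ab by (simp add: capT_def)
    have h2: "?P (n - i, False) = (n - i + 1, False)" using ab by (simp add: capT_def E_diag_def)
    have h3: "?P (n + i, True) = (n + i + 1, True)" using ab by (simp add: capT_def E_diag_def)
    have h4: "?P (n + i, False) = (n + i + 1, False)" using ab by (simp add: capT_def E_diag_def)
    have h5: "\<And>k. 1 \<le> k \<Longrightarrow> k \<le> ?m \<Longrightarrow> k \<noteq> n - i \<Longrightarrow> k \<noteq> n - i + 1 \<Longrightarrow> k \<noteq> n + i \<Longrightarrow> k \<noteq> n + i + 1 \<Longrightarrow> ?P (k, True) = (k, False)"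
      using ab by (simp add: capT_def E_diag_def)
    have "concat ?m ?P D = capT ?m (n - i) (capT ?m (n + i) D)
      \<and> loops ?m ?P D = 
        (if D (n + i, True) = (n + i + 1, True) then 1 else 0) + (if capT ?m (n + i) D (n - i, True) = (n - i + 1, True) then 1 else 0)"
      using concat_cap2[OF D P' ab h1 h2 h3 h4 h5] by simp
    then have "concat ?m (capT ?m (n - i) (capT ?m (n + i) (id_diag ?m))) D = capT ?m (n - i) (capT ?m (n + i) D)
      \<and> loops ?m (capT ?m (n - i) (capT ?m (n + i) (id_diag ?m))) D = 
        (if D (n + i, True) = (n + i + 1, True) then 1 else 0) + (if capT ?m (n + i) D (n - i, True) = (n - i + 1, True) then 1 else 0)"
      using E_capT[OF j2] by simp
    then show ?thesis using ge False by (simp add: Pg_def)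
  qed
qed

lemma word_eval_Cons: "word_eval m \<delta> \<phi> (g # w) = br_mult m \<delta> (\<phi> g) (word_eval m \<delta> \<phi> w)"
  by (simp add: word_eval_def)

lemma eval_main:
  assumes n: "2 \<le> n" and w: "\<forall>g\<in>set w. gidx g < n"
  shows "word_eval (2 * n) \<delta> (phiC n \<delta>) w = br_smult (\<delta> ^ evalL n w) (br_basis (evalD n w))
         \<and> evalD n w \<in> brauer_diagrams (2 * n)"
  using w
proof (induction w)
  case Nil
  then show ?case by (simp add: word_eval_def br_one_def basis_smult1[symmetric] id_BD)
next
  case (Cons g w)
  then have g: "gidx g < n" and IH: "word_eval (2 * n) \<delta> (phiC n \<delta>) w = br_smult (\<delta> ^ evalL n w) (br_basis (evalD n w))"
    "evalD n w \<in> brauer_diagrams (2 * n)" by auto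
  have a: "concat (2 * n) (Pg n g) (evalD n w) = act n g (evalD n w)"
     "loops (2 * n) (Pg n g) (evalD n w) = lcnt n g (evalD n w)" using act_Pg[OF n g IH(2)] by auto
  have "word_eval (2 * n) \<delta> (phiC n \<delta>) (g # w) = br_mult (2 * n) \<delta> (br_smult 1 (br_basis (Pg n g))) (br_smult (\<delta> ^ evalL n w) (br_basis (evalD n w)))"
    by (simp add: word_eval_Cons IH(1) phiC_Pg[OF n g])
  also have "\<dots> = br_smult (1 * \<delta> ^ evalL n w * \<delta> ^ lcnt n g (evalD n w)) (br_basis (act n g (evalD n w)))"
    by (simp only: br_mult_basis[OF Pg_BD[OF n g] IH(2)] a)
  also have "\<dots> = br_smult (\<delta> ^ evalL n (g # w)) (br_basis (evalD n (g # w)))"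
  proof -
    have "1 * \<delta> ^ evalL n w * \<delta> ^ lcnt n g (evalD n w) = \<delta> ^ evalL n (g # w)"
      by (simp add: power_add mult.commute)
    then show ?thesis by simp
  qed
  finally show ?case
    using IH(2) g n by (cases g) (auto intro!: relT_BD capT_BD sig_invol)
qed

definition tabD :: "nat \<Rightarrow> (dot \<times> dot) list \<Rightarrow> diagram" where
  "tabD m L = (\<lambda>x. if x \<in> dots m then (case map_of L x of Some y \<Rightarrow> y | None \<Rightarrow> id_diag m x) else x)"

definition capL :: "nat \<Rightarrow> nat \<Rightarrow> (dot \<times> dot) list \<Rightarrow> (dot \<times> dot) list" where
  "capL m j L = (let a = tabD m L (j, True); b = tabD m L (Suc j, True) in
     [((j, True), (Suc j, True)), ((Suc j, True), (j, True))] @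
     (if a = (Suc j, True) then [] else [(a, b), (b, a)]) @ L)"

definition relL :: "nat \<Rightarrow> (nat \<Rightarrow> nat) \<Rightarrow> nat list \<Rightarrow> (dot \<times> dot) list \<Rightarrow> (dot \<times> dot) list" where
  "relL m \<sigma> S L = map (\<lambda>x. (x, tT \<sigma> (tabD m L (tT \<sigma> x)))) (map fst L @ List.concat (map (\<lambda>k. [(k, True), (k, False)]) S))"

lemma id_tab: "id_diag m = tabD m []"
  by (auto simp: tabD_def id_diag_def fun_eq_iff)

lemma capT_tab: "capT m j (tabD m L) = tabD m (capL m j L)"
proof
  fix x :: dot
  let ?W = "tabD m L"
  let ?a = "?W (j, True)" and ?b = "?W (Suc j, True)"
  let ?L' = "[((j, True), (Suc j, True)), ((Suc j, True), (j, True))] @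
     (if ?a = (Suc j, True) then [] else [(?a, ?b), (?b, ?a)]) @ L"
  have L': "capL m j L = ?L'"
    by (simp add: capL_def Let_def)
  have c: "\<And>y. capT m j ?W y = (if y \<notin> dots m then y else if y = (j, True) then (Suc j, True)
      else if y = (Suc j, True) then (j, True) else if ?a = (Suc j, True) then ?W y
      else if y = ?a then ?b else if y = ?b then ?a else ?W y)"
    unfolding capT_def Suc_eq_plus1 by (rule refl)
  have t: "\<And>y. tabD m ?L' y = (if y \<in> dots m then (case map_of ?L' y of Some z \<Rightarrow> z | None \<Rightarrow> id_diag m y) else y)"
    by (simp only: tabD_def)
  have w: "\<And>y. y \<in> dots m \<Longrightarrow> y \<noteq> (j, True) \<Longrightarrow> y \<noteq> (Suc j, True) \<Longrightarrow> 
     (?a = (Suc j, True) \<or> (y \<noteq> ?a \<and> y \<noteq> ?b)) \<Longrightarrow> map_of ?L' y = map_of L y"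
    by auto
  have w2: "\<And>y. y \<in> dots m \<Longrightarrow> ?W y = (case map_of L y of Some z \<Rightarrow> z | None \<Rightarrow> id_diag m y)"
    by (simp add: tabD_def)
  show "capT m j ?W x = tabD m (capL m j L) x"
    unfolding L'
  proof (cases "x \<in> dots m")
    case False then show "capT m j ?W x = tabD m ?L' x" by (simp only: c t if_False if_True False) simp
  next
    case xd: True
    show "capT m j ?W x = tabD m ?L' x"
    proof (cases "x = (j, True) \<or> x = (Suc j, True)")
      case True then show ?thesis using xd by (auto simp only: c t) auto
    next
      case n1: False
      show ?thesis
      proof (cases "?a = (Suc j, True) \<or> (x \<noteq> ?a \<and> x \<noteq> ?b)")
        case True
        have "capT m j ?W x = ?W x" using True n1 xd c[of x] by auto
        also have "\<dots> = tabD m ?L' x" using w[OF xd _ _ True] n1 xd w2[OF xd] t[of x] by simp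
        finally show ?thesis .
      next
        case False
        then have n3: "?a \<noteq> (Suc j, True)" and x: "x = ?a \<or> x = ?b" by auto
        show ?thesis using x
        proof
          assume xa: "x = ?a"
          have "capT m j ?W x = ?b" using n1 n3 xd xa c[of x] by auto
          also have "\<dots> = tabD m ?L' x" using xa n1 n3 xd t[of x] by simp
          finally show ?thesis .
        next
          assume xb: "x = ?b"
          show ?thesis
          proof (cases "x = ?a")
            case True
            have "capT m j ?W x = ?b" using n1 n3 xd True c[of x] by auto
            also have "\<dots> = tabD m ?L' x" using True n1 n3 xd t[of x] by simp
            finally show ?thesis .
          next
            case False
            have "capT m j ?W x = ?a" using n1 n3 xd xb False c[of x] by auto
            also have "\<dots> = tabD m ?L' x" using xb False n1 n3 xd t[of x] by simp
            finally show ?thesis .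
          qed
        qed
      qed
    qed
  qed
qed

lemma map_of_relL:
  "map_of (map (\<lambda>x. (x, f x)) K) x = (if x \<in> set K then Some (f x) else None)"
  by (induction K) auto

lemma relT_tab:
  assumes S: "\<And>k. k \<notin> set S \<Longrightarrow> \<sigma> k = k"
  shows "relT m \<sigma> (tabD m L) = tabD m (relL m \<sigma> S L)"
proof
  fix x :: dot
  obtain k e where ke: "x = (k, e)" by (cases x)
  show "relT m \<sigma> (tabD m L) x = tabD m (relL m \<sigma> S L) x"
  proof (cases "x \<in> dots m")
    case False then show ?thesis by (simp add: relT_def tabD_def)
  next
    case True
    show ?thesis
    proof (cases "x \<in> set (map fst L @ List.concat (map (\<lambda>k. [(k, True), (k, False)]) S))")
      case True
      then show ?thesis using \<open>x \<in> dots m\<close>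
        by (simp add: relT_def relL_def map_of_relL tabD_def del: map_append set_append set_concat set_map)
    next
      case False
      then have kS: "k \<notin> set S" and kL: "x \<notin> set (map fst L)" using ke by auto
      have s: "\<sigma> k = k" using S[OF kS] .
      have "map_of L x = None" using kL by (simp add: map_of_eq_None_iff)
      then show ?thesis using \<open>x \<in> dots m\<close> False ke s
        by (cases e) (simp_all add: relT_def relL_def map_of_relL tabD_def tT_def id_diag_def
            del: map_append set_append set_concat set_map)
    qed
  qed
qed

definition Sg :: "nat \<Rightarrow> nat \<Rightarrow> nat list" where
  "Sg n i = (if i = 0 then [n, Suc n] else [n - i, Suc (n - i), n + i, Suc (n + i)])"

lemma sig_supp: "k \<notin> set (Sg n i) \<Longrightarrow> sig n i k = k"
  by (auto simp: Sg_def sig_def sw_def split: if_splits)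

lemma act_gr_tab: "m = 2 * n \<Longrightarrow> act n (gr i) (tabD m L) = tabD m (relL m (sig n i) (Sg n i) L)"
  using relT_tab[of "Sg n i" "sig n i"] sig_supp by simp

lemma act_ge_tab: "m = 2 * n \<Longrightarrow> act n (ge i) (tabD m L) =
   (if i = 0 then tabD m (capL m n L) else tabD m (capL m (n - i) (capL m (n + i) L)))"
  by (simp add: capT_tab)

lemma tab_eqI:
  assumes "\<forall>x\<in>set (map fst L1 @ map fst L2). x \<in> dots m \<longrightarrow> tabD m L1 x = tabD m L2 x"
  shows "tabD m L1 = tabD m L2"
proof
  fix x
  show "tabD m L1 x = tabD m L2 x"
  proof (cases "x \<in> set (map fst L1 @ map fst L2) \<and> x \<in> dots m")
    case True then show ?thesis using assms by blast
  next
    case False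
    then have "x \<notin> dots m \<or> (map_of L1 x = None \<and> map_of L2 x = None)"
      by (auto simp: map_of_eq_None_iff)
    then show ?thesis by (auto simp: tabD_def)
  qed
qed

lemma sw_simp: "sw j k = (if k = j then Suc j else if k = Suc j then j else k)"
  by (simp add: sw_def)

lemma tT_simps: "tT \<sigma> (k, True) = (\<sigma> k, True)" "tT \<sigma> (k, False) = (k, False)"
  by (simp_all add: tT_def)

lemma tabD_app: "tabD m L (k, e) = (if 1 \<le> k \<and> k \<le> m then (case map_of L (k, e) of Some y \<Rightarrow> y | None \<Rightarrow> (k, \<not> e)) else (k, e))"
  by (auto simp: tabD_def id_diag_def split: option.split)

lemmas evs = evalD.simps act_gr_tab act_ge_tab id_tab

lemmas evs2 = capL_def relL_def Let_def tabD_app sig_def sw_simp Sg_def tT_simps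

lemma P_A0_0:
  assumes "n = Suc (Suc q)" "i = 0"
  shows "evalD n [gr i, gr i] = evalD n [] \<and> evalL n [gr i, gr i] = 0 + evalL n []"
  apply (simp only: assms)
  apply (rule conjI)
   apply (simp del: act.simps add: evs)
   apply (rule tab_eqI)
   apply (simp add: evs2)
  apply (simp del: act.simps add: evs evs2 capT_tab)
  done

lemma P_A0_1:
  assumes "n = Suc (Suc q)" "i = 0"
  shows "evalD n [gr i, ge i] = evalD n [ge i] \<and> evalL n [gr i, ge i] = 0 + evalL n [ge i]"
  apply (simp only: assms)
  apply (rule conjI)
   apply (simp del: act.simps add: evs)
   apply (rule tab_eqI)
   apply (simp add: evs2)
  apply (simp del: act.simps add: evs evs2 capT_tab)
  done

lemma P_A0_2:
  assumes "n = Suc (Suc q)" "i = 0"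
  shows "evalD n [ge i, gr i] = evalD n [ge i] \<and> evalL n [ge i, gr i] = 0 + evalL n [ge i]"
  apply (simp only: assms)
  apply (rule conjI)
   apply (simp del: act.simps add: evs)
   apply (rule tab_eqI)
   apply (simp add: evs2)
  apply (simp del: act.simps add: evs evs2 capT_tab)
  done

lemma P_A0_3:
  assumes "n = Suc (Suc q)" "i = 0"
  shows "evalD n [ge i, ge i] = evalD n [ge i] \<and> evalL n [ge i, ge i] = (if i = 0 then 1 else 2) + evalL n [ge i]"
  apply (simp only: assms)
  apply (rule conjI)
   apply (simp del: act.simps add: evs)
   apply (rule tab_eqI)
   apply (simp add: evs2)
  apply (simp del: act.simps add: evs evs2 capT_tab)
  done

lemma P_AS_0:
  assumes "n = Suc p + Suc i0" "i = Suc i0"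
  shows "evalD n [gr i, gr i] = evalD n [] \<and> evalL n [gr i, gr i] = 0 + evalL n []"
  apply (simp only: assms)
  apply (rule conjI)
   apply (simp del: act.simps add: evs)
   apply (rule tab_eqI)
   apply (simp add: evs2)
  apply (simp del: act.simps add: evs evs2 capT_tab)
  done

lemma P_AS_1:
  assumes "n = Suc p + Suc i0" "i = Suc i0"
  shows "evalD n [gr i, ge i] = evalD n [ge i] \<and> evalL n [gr i, ge i] = 0 + evalL n [ge i]"
  apply (simp only: assms)
  apply (rule conjI)
   apply (simp del: act.simps add: evs)
   apply (rule tab_eqI)
   apply (simp add: evs2)
  apply (simp del: act.simps add: evs evs2 capT_tab)
  done

lemma P_AS_2:
  assumes "n = Suc p + Suc i0" "i = Suc i0"
  shows "evalD n [ge i, gr i] = evalD n [ge i] \<and> evalL n [ge i, gr i] = 0 + evalL n [ge i]"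
  apply (simp only: assms)
  apply (rule conjI)
   apply (simp del: act.simps add: evs)
   apply (rule tab_eqI)
   apply (simp add: evs2)
  apply (simp del: act.simps add: evs evs2 capT_tab)
  done

lemma P_AS_3:
  assumes "n = Suc p + Suc i0" "i = Suc i0"
  shows "evalD n [ge i, ge i] = evalD n [ge i] \<and> evalL n [ge i, ge i] = (if i = 0 then 1 else 2) + evalL n [ge i]"
  apply (simp only: assms)
  apply (rule conjI)
   apply (simp del: act.simps add: evs)
   apply (rule tab_eqI)
   apply (simp add: evs2)
  apply (simp del: act.simps add: evs evs2 capT_tab)
  done

lemma P_B1_0:
  assumes "n = Suc p + Suc (Suc j0)" "i = 0" "j = Suc (Suc j0)"
  shows "evalD n [gr i, gr j] = evalD n [gr j, gr i] \<and> evalL n [gr i, gr j] = 0 + evalL n [gr j, gr i]"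
  apply (simp only: assms)
  apply (rule conjI)
   apply (simp del: act.simps add: evs)
   apply (rule tab_eqI)
   apply (simp add: evs2)
  apply (simp del: act.simps add: evs evs2 capT_tab)
  done

lemma P_B1_1:
  assumes "n = Suc p + Suc (Suc j0)" "i = 0" "j = Suc (Suc j0)"
  shows "evalD n [ge i, gr j] = evalD n [gr j, ge i] \<and> evalL n [ge i, gr j] = 0 + evalL n [gr j, ge i]"
  apply (simp only: assms)
  apply (rule conjI)
   apply (simp del: act.simps add: evs)
   apply (rule tab_eqI)
   apply (simp add: evs2)
  apply (simp del: act.simps add: evs evs2 capT_tab)
  done

lemma P_B1_2:
  assumes "n = Suc p + Suc (Suc j0)" "i = 0" "j = Suc (Suc j0)"
  shows "evalD n [ge i, ge j] = evalD n [ge j, ge i] \<and> evalL n [ge i, ge j] = 0 + evalL n [ge j, ge i]"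
  apply (simp only: assms)
  apply (rule conjI)
   apply (simp del: act.simps add: evs)
   apply (rule tab_eqI)
   apply (simp add: evs2)
  apply (simp del: act.simps add: evs evs2 capT_tab)
  done

lemma P_B2_0:
  assumes "n = Suc p + Suc (Suc i0)" "i = Suc (Suc i0)" "j = 0"
  shows "evalD n [gr i, gr j] = evalD n [gr j, gr i] \<and> evalL n [gr i, gr j] = 0 + evalL n [gr j, gr i]"
  apply (simp only: assms)
  apply (rule conjI)
   apply (simp del: act.simps add: evs)
   apply (rule tab_eqI)
   apply (simp add: evs2)
  apply (simp del: act.simps add: evs evs2 capT_tab)
  done

lemma P_B2_1:
  assumes "n = Suc p + Suc (Suc i0)" "i = Suc (Suc i0)" "j = 0"
  shows "evalD n [ge i, gr j] = evalD n [gr j, ge i] \<and> evalL n [ge i, gr j] = 0 + evalL n [gr j, ge i]"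
  apply (simp only: assms)
  apply (rule conjI)
   apply (simp del: act.simps add: evs)
   apply (rule tab_eqI)
   apply (simp add: evs2)
  apply (simp del: act.simps add: evs evs2 capT_tab)
  done

lemma P_B2_2:
  assumes "n = Suc p + Suc (Suc i0)" "i = Suc (Suc i0)" "j = 0"
  shows "evalD n [ge i, ge j] = evalD n [ge j, ge i] \<and> evalL n [ge i, ge j] = 0 + evalL n [ge j, ge i]"
  apply (simp only: assms)
  apply (rule conjI)
   apply (simp del: act.simps add: evs)
   apply (rule tab_eqI)
   apply (simp add: evs2)
  apply (simp del: act.simps add: evs evs2 capT_tab)
  done

lemma P_B3_0:
  assumes "n = Suc p + (Suc i0 + Suc (Suc d))" "i = Suc i0" "j = Suc i0 + Suc (Suc d)"
  shows "evalD n [gr i, gr j] = evalD n [gr j, gr i] \<and> evalL n [gr i, gr j] = 0 + evalL n [gr j, gr i]"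
  apply (simp only: assms)
  apply (rule conjI)
   apply (simp del: act.simps add: evs)
   apply (rule tab_eqI)
   apply (simp add: evs2)
  apply (simp del: act.simps add: evs evs2 capT_tab)
  done

lemma P_B3_1:
  assumes "n = Suc p + (Suc i0 + Suc (Suc d))" "i = Suc i0" "j = Suc i0 + Suc (Suc d)"
  shows "evalD n [ge i, gr j] = evalD n [gr j, ge i] \<and> evalL n [ge i, gr j] = 0 + evalL n [gr j, ge i]"
  apply (simp only: assms)
  apply (rule conjI)
   apply (simp del: act.simps add: evs)
   apply (rule tab_eqI)
   apply (simp add: evs2)
  apply (simp del: act.simps add: evs evs2 capT_tab)
  done

lemma P_B3_2:
  assumes "n = Suc p + (Suc i0 + Suc (Suc d))" "i = Suc i0" "j = Suc i0 + Suc (Suc d)"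
  shows "evalD n [ge i, ge j] = evalD n [ge j, ge i] \<and> evalL n [ge i, ge j] = 0 + evalL n [ge j, ge i]"
  apply (simp only: assms)
  apply (rule conjI)
   apply (simp del: act.simps add: evs)
   apply (rule tab_eqI)
   apply (simp add: evs2)
  apply (simp del: act.simps add: evs evs2 capT_tab)
  done

lemma P_B4_0:
  assumes "n = Suc p + (Suc j0 + Suc (Suc d))" "j = Suc j0" "i = Suc j0 + Suc (Suc d)"
  shows "evalD n [gr i, gr j] = evalD n [gr j, gr i] \<and> evalL n [gr i, gr j] = 0 + evalL n [gr j, gr i]"
  apply (simp only: assms)
  apply (rule conjI)
   apply (simp del: act.simps add: evs)
   apply (rule tab_eqI)
   apply (simp add: evs2)
  apply (simp del: act.simps add: evs evs2 capT_tab)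
  done

lemma P_B4_1:
  assumes "n = Suc p + (Suc j0 + Suc (Suc d))" "j = Suc j0" "i = Suc j0 + Suc (Suc d)"
  shows "evalD n [ge i, gr j] = evalD n [gr j, ge i] \<and> evalL n [ge i, gr j] = 0 + evalL n [gr j, ge i]"
  apply (simp only: assms)
  apply (rule conjI)
   apply (simp del: act.simps add: evs)
   apply (rule tab_eqI)
   apply (simp add: evs2)
  apply (simp del: act.simps add: evs evs2 capT_tab)
  done

lemma P_B4_2:
  assumes "n = Suc p + (Suc j0 + Suc (Suc d))" "j = Suc j0" "i = Suc j0 + Suc (Suc d)"
  shows "evalD n [ge i, ge j] = evalD n [ge j, ge i] \<and> evalL n [ge i, ge j] = 0 + evalL n [ge j, ge i]"
  apply (simp only: assms)
  apply (rule conjI)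
   apply (simp del: act.simps add: evs)
   apply (rule tab_eqI)
   apply (simp add: evs2)
  apply (simp del: act.simps add: evs evs2 capT_tab)
  done

lemma P_C1_0:
  assumes "n = Suc p + Suc (Suc i0)" "i = Suc i0" "j = Suc (Suc i0)"
  shows "evalD n [gr i, gr j, gr i] = evalD n [gr j, gr i, gr j] \<and> evalL n [gr i, gr j, gr i] = 0 + evalL n [gr j, gr i, gr j]"
  apply (simp only: assms)
  apply (rule conjI)
   apply (simp del: act.simps add: evs)
   apply (rule tab_eqI)
   apply (simp add: evs2)
  apply (simp del: act.simps add: evs evs2 capT_tab)
  done

lemma P_C1_1:
  assumes "n = Suc p + Suc (Suc i0)" "i = Suc i0" "j = Suc (Suc i0)"
  shows "evalD n [gr j, gr i, ge j] = evalD n [ge i, ge j] \<and> evalL n [gr j, gr i, ge j] = 0 + evalL n [ge i, ge j]"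
  apply (simp only: assms)
  apply (rule conjI)
   apply (simp del: act.simps add: evs)
   apply (rule tab_eqI)
   apply (simp add: evs2)
  apply (simp del: act.simps add: evs evs2 capT_tab)
  done

lemma P_C1_2:
  assumes "n = Suc p + Suc (Suc i0)" "i = Suc i0" "j = Suc (Suc i0)"
  shows "evalD n [gr i, ge j, gr i] = evalD n [gr j, ge i, gr j] \<and> evalL n [gr i, ge j, gr i] = 0 + evalL n [gr j, ge i, gr j]"
  apply (simp only: assms)
  apply (rule conjI)
   apply (simp del: act.simps add: evs)
   apply (rule tab_eqI)
   apply (simp add: evs2)
  apply (simp del: act.simps add: evs evs2 capT_tab)
  done

lemma P_C2_0:
  assumes "n = Suc p + Suc (Suc j0)" "j = Suc j0" "i = Suc (Suc j0)"
  shows "evalD n [gr i, gr j, gr i] = evalD n [gr j, gr i, gr j] \<and> evalL n [gr i, gr j, gr i] = 0 + evalL n [gr j, gr i, gr j]"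
  apply (simp only: assms)
  apply (rule conjI)
   apply (simp del: act.simps add: evs)
   apply (rule tab_eqI)
   apply (simp add: evs2)
  apply (simp del: act.simps add: evs evs2 capT_tab)
  done

lemma P_C2_1:
  assumes "n = Suc p + Suc (Suc j0)" "j = Suc j0" "i = Suc (Suc j0)"
  shows "evalD n [gr j, gr i, ge j] = evalD n [ge i, ge j] \<and> evalL n [gr j, gr i, ge j] = 0 + evalL n [ge i, ge j]"
  apply (simp only: assms)
  apply (rule conjI)
   apply (simp del: act.simps add: evs)
   apply (rule tab_eqI)
   apply (simp add: evs2)
  apply (simp del: act.simps add: evs evs2 capT_tab)
  done

lemma P_C2_2:
  assumes "n = Suc p + Suc (Suc j0)" "j = Suc j0" "i = Suc (Suc j0)"
  shows "evalD n [gr i, ge j, gr i] = evalD n [gr j, ge i, gr j] \<and> evalL n [gr i, ge j, gr i] = 0 + evalL n [gr j, ge i, gr j]"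
  apply (simp only: assms)
  apply (rule conjI)
   apply (simp del: act.simps add: evs)
   apply (rule tab_eqI)
   apply (simp add: evs2)
  apply (simp del: act.simps add: evs evs2 capT_tab)
  done

lemma P_D_0:
  assumes "n = Suc (Suc q)"
  shows "evalD n [gr 1, gr 0, gr 1, gr 0] = evalD n [gr 0, gr 1, gr 0, gr 1] \<and> evalL n [gr 1, gr 0, gr 1, gr 0] = 0 + evalL n [gr 0, gr 1, gr 0, gr 1]"
  apply (simp only: assms)
  apply (rule conjI)
   apply (simp del: act.simps add: evs)
   apply (rule tab_eqI)
   apply (simp add: evs2)
  apply (simp del: act.simps add: evs evs2 capT_tab)
  done

lemma P_D_1:
  assumes "n = Suc (Suc q)"
  shows "evalD n [gr 1, gr 0, ge 1] = evalD n [gr 0, ge 1] \<and> evalL n [gr 1, gr 0, ge 1] = 0 + evalL n [gr 0, ge 1]"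
  apply (simp only: assms)
  apply (rule conjI)
   apply (simp del: act.simps add: evs)
   apply (rule tab_eqI)
   apply (simp add: evs2)
  apply (simp del: act.simps add: evs evs2 capT_tab)
  done

lemma P_D_2:
  assumes "n = Suc (Suc q)"
  shows "evalD n [gr 1, ge 0, gr 1, ge 0] = evalD n [ge 0, ge 1, ge 0] \<and> evalL n [gr 1, ge 0, gr 1, ge 0] = 0 + evalL n [ge 0, ge 1, ge 0]"
  apply (simp only: assms)
  apply (rule conjI)
   apply (simp del: act.simps add: evs)
   apply (rule tab_eqI)
   apply (simp add: evs2)
  apply (simp del: act.simps add: evs evs2 capT_tab)
  done

lemma P_D_3:
  assumes "n = Suc (Suc q)"
  shows "evalD n [gr 1, gr 0, gr 1, ge 0] = evalD n [ge 0, gr 1, gr 0, gr 1] \<and> evalL n [gr 1, gr 0, gr 1, ge 0] = 0 + evalL n [ge 0, gr 1, gr 0, gr 1]"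
  apply (simp only: assms)
  apply (rule conjI)
   apply (simp del: act.simps add: evs)
   apply (rule tab_eqI)
   apply (simp add: evs2)
  apply (simp del: act.simps add: evs evs2 capT_tab)
  done

lemma P_D_4:
  assumes "n = Suc (Suc q)"
  shows "evalD n [ge 1, gr 0, ge 1] = evalD n [ge 1] \<and> evalL n [ge 1, gr 0, ge 1] = 1 + evalL n [ge 1]"
  apply (simp only: assms)
  apply (rule conjI)
   apply (simp del: act.simps add: evs)
   apply (rule tab_eqI)
   apply (simp add: evs2)
  apply (simp del: act.simps add: evs evs2 capT_tab)
  done

lemma P_D_5:
  assumes "n = Suc (Suc q)"
  shows "evalD n [ge 1, ge 0, ge 1] = evalD n [ge 1] \<and> evalL n [ge 1, ge 0, ge 1] = 1 + evalL n [ge 1]"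
  apply (simp only: assms)
  apply (rule conjI)
   apply (simp del: act.simps add: evs)
   apply (rule tab_eqI)
   apply (simp add: evs2)
  apply (simp del: act.simps add: evs evs2 capT_tab)
  done

lemma P_D_6:
  assumes "n = Suc (Suc q)"
  shows "evalD n [ge 1, gr 0, gr 1] = evalD n [ge 1, gr 0] \<and> evalL n [ge 1, gr 0, gr 1] = 0 + evalL n [ge 1, gr 0]"
  apply (simp only: assms)
  apply (rule conjI)
   apply (simp del: act.simps add: evs)
   apply (rule tab_eqI)
   apply (simp add: evs2)
  apply (simp del: act.simps add: evs evs2 capT_tab)
  done

lemma P_D_7:
  assumes "n = Suc (Suc q)"
  shows "evalD n [ge 1, ge 0, gr 1] = evalD n [ge 1, ge 0] \<and> evalL n [ge 1, ge 0, gr 1] = 0 + evalL n [ge 1, ge 0]"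
  apply (simp only: assms)
  apply (rule conjI)
   apply (simp del: act.simps add: evs)
   apply (rule tab_eqI)
   apply (simp add: evs2)
  apply (simp del: act.simps add: evs evs2 capT_tab)
  done

definition E2 :: "nat \<Rightarrow> nat \<Rightarrow> nat \<Rightarrow> diagram" where
  "E2 m a b = (\<lambda>(k, e). if (k, e) \<notin> dots m then (k, e)
     else if k = a then (a + 1, e) else if k = a + 1 then (a, e)
     else if k = b then (b + 1, e) else if k = b + 1 then (b, e) else (k, \<not> e))"

lemma E2_eq: "1 \<le> a \<Longrightarrow> a + 1 < b \<Longrightarrow> b + 1 \<le> m \<Longrightarrow> capT m a (E_diag m b) = E2 m a b"
  by (auto simp: capT_def E_diag_def E2_def fun_eq_iff)

lemma Pg_ge0: "2 \<le> n \<Longrightarrow> Pg n (ge 0) = E_diag (2 * n) n"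
  by (simp add: Pg_def E_capT)

lemma Pg_geS: "2 \<le> n \<Longrightarrow> 0 < i \<Longrightarrow> i < n \<Longrightarrow> Pg n (ge i) = E2 (2 * n) (n - i) (n + i)"
  using E_capT[of "n + i" "2 * n"] E2_eq[of "n - i" "n + i" "2 * n"] by (simp add: Pg_def)

lemma sym_E: "2 \<le> n \<Longrightarrow> symmetric_diag (2 * n) (E_diag (2 * n) n)"
  unfolding symmetric_diag_def by (auto simp: E_diag_def mirror_def)

lemma sym_E2: "2 \<le> n \<Longrightarrow> 0 < i \<Longrightarrow> i < n \<Longrightarrow> symmetric_diag (2 * n) (E2 (2 * n) (n - i) (n + i))"
  unfolding symmetric_diag_def by (auto simp: E2_def mirror_def)

lemma sw_mirror: "1 \<le> k \<Longrightarrow> k < M \<Longrightarrow> j + 1 < M \<Longrightarrow> sw j (M - k) = M - sw (M - Suc j) k"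
  unfolding sw_def by auto

lemma sw_bounds: "1 \<le> k \<Longrightarrow> k < M \<Longrightarrow> 1 \<le> j \<Longrightarrow> j + 1 < M \<Longrightarrow> 1 \<le> sw j k \<and> sw j k < M"
  unfolding sw_def by auto

lemma sig_mirror: assumes n: "2 \<le> n" and i: "i < n" and k: "1 \<le> k" "k \<le> 2 * n"
  shows "sig n i (2 * n + 1 - k) = 2 * n + 1 - sig n i k"
proof (cases "i = 0")
  case True
  have "2 * n + 1 - Suc n = n" by simp
  then show ?thesis using True sw_mirror[of k "2 * n + 1" n] k n by (simp add: sig_def)
next
  case False
  let ?M = "2 * n + 1"
  have e1: "?M - Suc (n + i) = n - i" and e2: "?M - Suc (n - i) = n + i" using False i by auto
  have k': "k < ?M" using k by simp
  have b: "1 \<le> sw (n - i) k \<and> sw (n - i) k < ?M" using sw_bounds[OF k(1) k'] False i by auto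
  have "sig n i (?M - k) = sw (n - i) (sw (n + i) (?M - k))" using False by (simp add: sig_def)
  also have "sw (n + i) (?M - k) = ?M - sw (n - i) k" using sw_mirror[OF k(1) k', of "n + i"] e1 i by simp
  also have "sw (n - i) (?M - sw (n - i) k) = ?M - sw (n + i) (sw (n - i) k)"
    using sw_mirror[of "sw (n - i) k" ?M "n - i"] b e2 False i by simp
  also have "sw (n + i) (sw (n - i) k) = sw (n - i) (sw (n + i) k)" using sw_comm[of "n - i" "n + i" k] False i by simp
  finally show ?thesis using False by (simp add: sig_def)
qed

lemma sym_perm: assumes "2 \<le> n" "i < n" shows "symmetric_diag (2 * n) (permD (2 * n) (sig n i))"
  unfolding symmetric_diag_def
proof
  fix x :: dot assume x: "x \<in> dots (2 * n)"
  obtain k e where ke: "x = (k, e)" by (cases x)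
  have k: "1 \<le> k" "k \<le> 2 * n" using x ke by auto
  have r: "1 \<le> sig n i k \<and> sig n i k \<le> 2 * n" using sig_invol[OF assms] k by (simp add: invol_def)
  have m: "1 \<le> 2 * n + 1 - k \<and> 2 * n + 1 - k \<le> 2 * n" using k by arith
  show "permD (2 * n) (sig n i) (mirror (2 * n) x) = mirror (2 * n) (permD (2 * n) (sig n i) x)"
    using ke k r m sig_mirror[OF assms k] by (simp add: permD_def mirror_def)
qed

lemma Pg_sym: assumes n: "2 \<le> n" and g: "gidx g < n" shows "symmetric_diag (2 * n) (Pg n g)"
proof (cases g)
  case (gr i) then show ?thesis using sym_perm[OF n] g by (simp add: Pg_def)
next
  case (ge i)
  show ?thesis
  proof (cases "i = 0")
    case True then show ?thesis using ge n Pg_ge0 sym_E by simp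
  next
    case False then show ?thesis using ge n g Pg_geS sym_E2 by simp
  qed
qed

lemma phiC_SBr: assumes n: "2 \<le> n" and g: "gidx g < n" shows "phiC n \<delta> g \<in> SBr (2 * n)"
  unfolding SBr_def phiC_Pg[OF n g]
  using Pg_BD[OF n g] Pg_sym[OF n g] by (auto simp: br_smult_def br_basis_def split: if_splits)

definition wrel :: "nat \<Rightarrow> 'a::comm_ring_1 \<Rightarrow> Cgen list \<Rightarrow> nat \<Rightarrow> Cgen list \<Rightarrow> bool" where
  "wrel n \<delta> l c r = (word_eval (2 * n) \<delta> (phiC n \<delta>) l = br_smult (\<delta> ^ c) (word_eval (2 * n) \<delta> (phiC n \<delta>) r))"

lemma rel_ok:
  assumes n: "2 \<le> n" and gl: "\<forall>g\<in>set l. gidx g < n" and gr': "\<forall>g\<in>set r. gidx g < n"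
    and e: "evalD n l = evalD n r \<and> evalL n l = c + evalL n r"
  shows "wrel n \<delta> l c r"
proof -
  have L: "word_eval (2 * n) \<delta> (phiC n \<delta>) l = br_smult (\<delta> ^ evalL n l) (br_basis (evalD n l))"
    using eval_main[OF n gl] by blast
  have R: "word_eval (2 * n) \<delta> (phiC n \<delta>) r = br_smult (\<delta> ^ evalL n r) (br_basis (evalD n r))"
    using eval_main[OF n gr'] by blast
  show ?thesis unfolding wrel_def using L R e by (simp add: smult_smult power_add)
qed

lemma RA_0:
  assumes n: "2 \<le> n" and i: "i < n"
  shows "wrel n \<delta> [gr i, gr i] (0) []"
proof (rule rel_ok[OF n])
  show "\<forall>g\<in>set [gr i, gr i]. gidx g < n" "\<forall>g\<in>set []. gidx g < n" using i by auto
  show "evalD n [gr i, gr i] = evalD n [] \<and> evalL n [gr i, gr i] = (0) + evalL n []"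
  proof (cases "i = 0")
    case True
    have "n = Suc (Suc (n - 2))" using n by simp
    from P_A0_0[OF this True] show ?thesis .
  next
    case False
    have "n = Suc (n - i - 1) + Suc (i - 1)" "i = Suc (i - 1)" using n i False by auto
    from P_AS_0[OF this] show ?thesis .
  qed
qed

lemma RA_1:
  assumes n: "2 \<le> n" and i: "i < n"
  shows "wrel n \<delta> [gr i, ge i] (0) [ge i]"
proof (rule rel_ok[OF n])
  show "\<forall>g\<in>set [gr i, ge i]. gidx g < n" "\<forall>g\<in>set [ge i]. gidx g < n" using i by auto
  show "evalD n [gr i, ge i] = evalD n [ge i] \<and> evalL n [gr i, ge i] = (0) + evalL n [ge i]"
  proof (cases "i = 0")
    case True
    have "n = Suc (Suc (n - 2))" using n by simp
    from P_A0_1[OF this True] show ?thesis .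
  next
    case False
    have "n = Suc (n - i - 1) + Suc (i - 1)" "i = Suc (i - 1)" using n i False by auto
    from P_AS_1[OF this] show ?thesis .
  qed
qed

lemma RA_2:
  assumes n: "2 \<le> n" and i: "i < n"
  shows "wrel n \<delta> [ge i, gr i] (0) [ge i]"
proof (rule rel_ok[OF n])
  show "\<forall>g\<in>set [ge i, gr i]. gidx g < n" "\<forall>g\<in>set [ge i]. gidx g < n" using i by auto
  show "evalD n [ge i, gr i] = evalD n [ge i] \<and> evalL n [ge i, gr i] = (0) + evalL n [ge i]"
  proof (cases "i = 0")
    case True
    have "n = Suc (Suc (n - 2))" using n by simp
    from P_A0_2[OF this True] show ?thesis .
  next
    case False
    have "n = Suc (n - i - 1) + Suc (i - 1)" "i = Suc (i - 1)" using n i False by auto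
    from P_AS_2[OF this] show ?thesis .
  qed
qed

lemma RA_3:
  assumes n: "2 \<le> n" and i: "i < n"
  shows "wrel n \<delta> [ge i, ge i] ((if i = 0 then 1 else 2)) [ge i]"
proof (rule rel_ok[OF n])
  show "\<forall>g\<in>set [ge i, ge i]. gidx g < n" "\<forall>g\<in>set [ge i]. gidx g < n" using i by auto
  show "evalD n [ge i, ge i] = evalD n [ge i] \<and> evalL n [ge i, ge i] = ((if i = 0 then 1 else 2)) + evalL n [ge i]"
  proof (cases "i = 0")
    case True
    have "n = Suc (Suc (n - 2))" using n by simp
    from P_A0_3[OF this True] show ?thesis .
  next
    case False
    have "n = Suc (n - i - 1) + Suc (i - 1)" "i = Suc (i - 1)" using n i False by auto
    from P_AS_3[OF this] show ?thesis .
  qed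
qed

lemma RB_0:
  assumes n: "2 \<le> n" and i: "i < n" and j: "j < n" and na: "nadj i j"
  shows "wrel n \<delta> [gr i, gr j] 0 [gr j, gr i]"
proof (rule rel_ok[OF n])
  show "\<forall>g\<in>set [gr i, gr j]. gidx g < n" "\<forall>g\<in>set [gr j, gr i]. gidx g < n" using i j by auto
  have na': "i \<noteq> j" "i + 1 \<noteq> j" "j + 1 \<noteq> i" using na by (auto simp: nadj_def)
  show "evalD n [gr i, gr j] = evalD n [gr j, gr i] \<and> evalL n [gr i, gr j] = 0 + evalL n [gr j, gr i]"
  proof (cases "i = 0")
    case True
    have "n = Suc (n - j - 1) + Suc (Suc (j - 2))" "j = Suc (Suc (j - 2))" using n i j na' True by auto
    from P_B1_0[OF this(1) True this(2)] show ?thesis .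
  next
    case i0: False
    show ?thesis
    proof (cases "j = 0")
      case True
      have "n = Suc (n - i - 1) + Suc (Suc (i - 2))" "i = Suc (Suc (i - 2))" using n i j na' True by auto
      from P_B2_0[OF this True] show ?thesis .
    next
      case j0: False
      show ?thesis
      proof (cases "i < j")
        case True
        have "n = Suc (n - j - 1) + (Suc (i - 1) + Suc (Suc (j - i - 2)))" "i = Suc (i - 1)" "j = Suc (i - 1) + Suc (Suc (j - i - 2))"
          using n i j na' True i0 j0 by auto
        from P_B3_0[OF this] show ?thesis .
      next
        case False
        have "n = Suc (n - i - 1) + (Suc (j - 1) + Suc (Suc (i - j - 2)))" "j = Suc (j - 1)" "i = Suc (j - 1) + Suc (Suc (i - j - 2))"
          using n i j na' False i0 j0 by auto
        from P_B4_0[OF this] show ?thesis .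
      qed
    qed
  qed
qed

lemma RB_1:
  assumes n: "2 \<le> n" and i: "i < n" and j: "j < n" and na: "nadj i j"
  shows "wrel n \<delta> [ge i, gr j] 0 [gr j, ge i]"
proof (rule rel_ok[OF n])
  show "\<forall>g\<in>set [ge i, gr j]. gidx g < n" "\<forall>g\<in>set [gr j, ge i]. gidx g < n" using i j by auto
  have na': "i \<noteq> j" "i + 1 \<noteq> j" "j + 1 \<noteq> i" using na by (auto simp: nadj_def)
  show "evalD n [ge i, gr j] = evalD n [gr j, ge i] \<and> evalL n [ge i, gr j] = 0 + evalL n [gr j, ge i]"
  proof (cases "i = 0")
    case True
    have "n = Suc (n - j - 1) + Suc (Suc (j - 2))" "j = Suc (Suc (j - 2))" using n i j na' True by auto
    from P_B1_1[OF this(1) True this(2)] show ?thesis .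
  next
    case i0: False
    show ?thesis
    proof (cases "j = 0")
      case True
      have "n = Suc (n - i - 1) + Suc (Suc (i - 2))" "i = Suc (Suc (i - 2))" using n i j na' True by auto
      from P_B2_1[OF this True] show ?thesis .
    next
      case j0: False
      show ?thesis
      proof (cases "i < j")
        case True
        have "n = Suc (n - j - 1) + (Suc (i - 1) + Suc (Suc (j - i - 2)))" "i = Suc (i - 1)" "j = Suc (i - 1) + Suc (Suc (j - i - 2))"
          using n i j na' True i0 j0 by auto
        from P_B3_1[OF this] show ?thesis .
      next
        case False
        have "n = Suc (n - i - 1) + (Suc (j - 1) + Suc (Suc (i - j - 2)))" "j = Suc (j - 1)" "i = Suc (j - 1) + Suc (Suc (i - j - 2))"
          using n i j na' False i0 j0 by auto
        from P_B4_1[OF this] show ?thesis .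
      qed
    qed
  qed
qed

lemma RB_2:
  assumes n: "2 \<le> n" and i: "i < n" and j: "j < n" and na: "nadj i j"
  shows "wrel n \<delta> [ge i, ge j] 0 [ge j, ge i]"
proof (rule rel_ok[OF n])
  show "\<forall>g\<in>set [ge i, ge j]. gidx g < n" "\<forall>g\<in>set [ge j, ge i]. gidx g < n" using i j by auto
  have na': "i \<noteq> j" "i + 1 \<noteq> j" "j + 1 \<noteq> i" using na by (auto simp: nadj_def)
  show "evalD n [ge i, ge j] = evalD n [ge j, ge i] \<and> evalL n [ge i, ge j] = 0 + evalL n [ge j, ge i]"
  proof (cases "i = 0")
    case True
    have "n = Suc (n - j - 1) + Suc (Suc (j - 2))" "j = Suc (Suc (j - 2))" using n i j na' True by auto
    from P_B1_2[OF this(1) True this(2)] show ?thesis .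
  next
    case i0: False
    show ?thesis
    proof (cases "j = 0")
      case True
      have "n = Suc (n - i - 1) + Suc (Suc (i - 2))" "i = Suc (Suc (i - 2))" using n i j na' True by auto
      from P_B2_2[OF this True] show ?thesis .
    next
      case j0: False
      show ?thesis
      proof (cases "i < j")
        case True
        have "n = Suc (n - j - 1) + (Suc (i - 1) + Suc (Suc (j - i - 2)))" "i = Suc (i - 1)" "j = Suc (i - 1) + Suc (Suc (j - i - 2))"
          using n i j na' True i0 j0 by auto
        from P_B3_2[OF this] show ?thesis .
      next
        case False
        have "n = Suc (n - i - 1) + (Suc (j - 1) + Suc (Suc (i - j - 2)))" "j = Suc (j - 1)" "i = Suc (j - 1) + Suc (Suc (i - j - 2))"
          using n i j na' False i0 j0 by auto
        from P_B4_2[OF this] show ?thesis .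
      qed
    qed
  qed
qed

lemma RC_0:
  assumes n: "2 \<le> n" and i: "i < n" and j: "j < n" and i0: "0 < i" and j0: "0 < j" and a: "adj i j"
  shows "wrel n \<delta> [gr i, gr j, gr i] 0 [gr j, gr i, gr j]"
proof (rule rel_ok[OF n])
  show "\<forall>g\<in>set [gr i, gr j, gr i]. gidx g < n" "\<forall>g\<in>set [gr j, gr i, gr j]. gidx g < n" using i j by auto
  show "evalD n [gr i, gr j, gr i] = evalD n [gr j, gr i, gr j] \<and> evalL n [gr i, gr j, gr i] = 0 + evalL n [gr j, gr i, gr j]"
  proof (cases "i + 1 = j")
    case True
    have "n = Suc (n - j - 1) + Suc (Suc (i - 1))" "i = Suc (i - 1)" "j = Suc (Suc (i - 1))" using n i j i0 True by auto
    from P_C1_0[OF this] show ?thesis .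
  next
    case False
    then have "j + 1 = i" using a by (auto simp: adj_def)
    then have "n = Suc (n - i - 1) + Suc (Suc (j - 1))" "j = Suc (j - 1)" "i = Suc (Suc (j - 1))" using n i j j0 by auto
    from P_C2_0[OF this] show ?thesis .
  qed
qed

lemma RC_1:
  assumes n: "2 \<le> n" and i: "i < n" and j: "j < n" and i0: "0 < i" and j0: "0 < j" and a: "adj i j"
  shows "wrel n \<delta> [gr j, gr i, ge j] 0 [ge i, ge j]"
proof (rule rel_ok[OF n])
  show "\<forall>g\<in>set [gr j, gr i, ge j]. gidx g < n" "\<forall>g\<in>set [ge i, ge j]. gidx g < n" using i j by auto
  show "evalD n [gr j, gr i, ge j] = evalD n [ge i, ge j] \<and> evalL n [gr j, gr i, ge j] = 0 + evalL n [ge i, ge j]"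
  proof (cases "i + 1 = j")
    case True
    have "n = Suc (n - j - 1) + Suc (Suc (i - 1))" "i = Suc (i - 1)" "j = Suc (Suc (i - 1))" using n i j i0 True by auto
    from P_C1_1[OF this] show ?thesis .
  next
    case False
    then have "j + 1 = i" using a by (auto simp: adj_def)
    then have "n = Suc (n - i - 1) + Suc (Suc (j - 1))" "j = Suc (j - 1)" "i = Suc (Suc (j - 1))" using n i j j0 by auto
    from P_C2_1[OF this] show ?thesis .
  qed
qed

lemma RC_2:
  assumes n: "2 \<le> n" and i: "i < n" and j: "j < n" and i0: "0 < i" and j0: "0 < j" and a: "adj i j"
  shows "wrel n \<delta> [gr i, ge j, gr i] 0 [gr j, ge i, gr j]"
proof (rule rel_ok[OF n])
  show "\<forall>g\<in>set [gr i, ge j, gr i]. gidx g < n" "\<forall>g\<in>set [gr j, ge i, gr j]. gidx g < n" using i j by auto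
  show "evalD n [gr i, ge j, gr i] = evalD n [gr j, ge i, gr j] \<and> evalL n [gr i, ge j, gr i] = 0 + evalL n [gr j, ge i, gr j]"
  proof (cases "i + 1 = j")
    case True
    have "n = Suc (n - j - 1) + Suc (Suc (i - 1))" "i = Suc (i - 1)" "j = Suc (Suc (i - 1))" using n i j i0 True by auto
    from P_C1_2[OF this] show ?thesis .
  next
    case False
    then have "j + 1 = i" using a by (auto simp: adj_def)
    then have "n = Suc (n - i - 1) + Suc (Suc (j - 1))" "j = Suc (j - 1)" "i = Suc (Suc (j - 1))" using n i j j0 by auto
    from P_C2_2[OF this] show ?thesis .
  qed
qed

lemma RD_0:
  assumes n: "2 \<le> n"
  shows "wrel n \<delta> [gr 1, gr 0, gr 1, gr 0] 0 [gr 0, gr 1, gr 0, gr 1]"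
proof (rule rel_ok[OF n])
  show "\<forall>g\<in>set [gr 1, gr 0, gr 1, gr 0]. gidx g < n" "\<forall>g\<in>set [gr 0, gr 1, gr 0, gr 1]. gidx g < n" using n by auto
  have "n = Suc (Suc (n - 2))" using n by simp
  from P_D_0[OF this] show "evalD n [gr 1, gr 0, gr 1, gr 0] = evalD n [gr 0, gr 1, gr 0, gr 1] \<and> evalL n [gr 1, gr 0, gr 1, gr 0] = 0 + evalL n [gr 0, gr 1, gr 0, gr 1]" .
qed

lemma RD_1:
  assumes n: "2 \<le> n"
  shows "wrel n \<delta> [gr 1, gr 0, ge 1] 0 [gr 0, ge 1]"
proof (rule rel_ok[OF n])
  show "\<forall>g\<in>set [gr 1, gr 0, ge 1]. gidx g < n" "\<forall>g\<in>set [gr 0, ge 1]. gidx g < n" using n by auto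
  have "n = Suc (Suc (n - 2))" using n by simp
  from P_D_1[OF this] show "evalD n [gr 1, gr 0, ge 1] = evalD n [gr 0, ge 1] \<and> evalL n [gr 1, gr 0, ge 1] = 0 + evalL n [gr 0, ge 1]" .
qed

lemma RD_2:
  assumes n: "2 \<le> n"
  shows "wrel n \<delta> [gr 1, ge 0, gr 1, ge 0] 0 [ge 0, ge 1, ge 0]"
proof (rule rel_ok[OF n])
  show "\<forall>g\<in>set [gr 1, ge 0, gr 1, ge 0]. gidx g < n" "\<forall>g\<in>set [ge 0, ge 1, ge 0]. gidx g < n" using n by auto
  have "n = Suc (Suc (n - 2))" using n by simp
  from P_D_2[OF this] show "evalD n [gr 1, ge 0, gr 1, ge 0] = evalD n [ge 0, ge 1, ge 0] \<and> evalL n [gr 1, ge 0, gr 1, ge 0] = 0 + evalL n [ge 0, ge 1, ge 0]" .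
qed

lemma RD_3:
  assumes n: "2 \<le> n"
  shows "wrel n \<delta> [gr 1, gr 0, gr 1, ge 0] 0 [ge 0, gr 1, gr 0, gr 1]"
proof (rule rel_ok[OF n])
  show "\<forall>g\<in>set [gr 1, gr 0, gr 1, ge 0]. gidx g < n" "\<forall>g\<in>set [ge 0, gr 1, gr 0, gr 1]. gidx g < n" using n by auto
  have "n = Suc (Suc (n - 2))" using n by simp
  from P_D_3[OF this] show "evalD n [gr 1, gr 0, gr 1, ge 0] = evalD n [ge 0, gr 1, gr 0, gr 1] \<and> evalL n [gr 1, gr 0, gr 1, ge 0] = 0 + evalL n [ge 0, gr 1, gr 0, gr 1]" .
qed

lemma RD_4:
  assumes n: "2 \<le> n"
  shows "wrel n \<delta> [ge 1, gr 0, ge 1] 1 [ge 1]"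
proof (rule rel_ok[OF n])
  show "\<forall>g\<in>set [ge 1, gr 0, ge 1]. gidx g < n" "\<forall>g\<in>set [ge 1]. gidx g < n" using n by auto
  have "n = Suc (Suc (n - 2))" using n by simp
  from P_D_4[OF this] show "evalD n [ge 1, gr 0, ge 1] = evalD n [ge 1] \<and> evalL n [ge 1, gr 0, ge 1] = 1 + evalL n [ge 1]" .
qed

lemma RD_5:
  assumes n: "2 \<le> n"
  shows "wrel n \<delta> [ge 1, ge 0, ge 1] 1 [ge 1]"
proof (rule rel_ok[OF n])
  show "\<forall>g\<in>set [ge 1, ge 0, ge 1]. gidx g < n" "\<forall>g\<in>set [ge 1]. gidx g < n" using n by auto
  have "n = Suc (Suc (n - 2))" using n by simp
  from P_D_5[OF this] show "evalD n [ge 1, ge 0, ge 1] = evalD n [ge 1] \<and> evalL n [ge 1, ge 0, ge 1] = 1 + evalL n [ge 1]" .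
qed

lemma RD_6:
  assumes n: "2 \<le> n"
  shows "wrel n \<delta> [ge 1, gr 0, gr 1] 0 [ge 1, gr 0]"
proof (rule rel_ok[OF n])
  show "\<forall>g\<in>set [ge 1, gr 0, gr 1]. gidx g < n" "\<forall>g\<in>set [ge 1, gr 0]. gidx g < n" using n by auto
  have "n = Suc (Suc (n - 2))" using n by simp
  from P_D_6[OF this] show "evalD n [ge 1, gr 0, gr 1] = evalD n [ge 1, gr 0] \<and> evalL n [ge 1, gr 0, gr 1] = 0 + evalL n [ge 1, gr 0]" .
qed

lemma RD_7:
  assumes n: "2 \<le> n"
  shows "wrel n \<delta> [ge 1, ge 0, gr 1] 0 [ge 1, ge 0]"
proof (rule rel_ok[OF n])
  show "\<forall>g\<in>set [ge 1, ge 0, gr 1]. gidx g < n" "\<forall>g\<in>set [ge 1, ge 0]. gidx g < n" using n by auto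
  have "n = Suc (Suc (n - 2))" using n by simp
  from P_D_7[OF this] show "evalD n [ge 1, ge 0, gr 1] = evalD n [ge 1, ge 0] \<and> evalL n [ge 1, ge 0, gr 1] = 0 + evalL n [ge 1, ge 0]" .
qed

lemma RDS_0: "2 \<le> n \<Longrightarrow> wrel n \<delta> [gr (Suc 0), gr 0, gr (Suc 0), gr 0] 0 [gr 0, gr (Suc 0), gr 0, gr (Suc 0)]"
  using RD_0[of n \<delta>] by simp

lemma RDS_1: "2 \<le> n \<Longrightarrow> wrel n \<delta> [gr (Suc 0), gr 0, ge (Suc 0)] 0 [gr 0, ge (Suc 0)]"
  using RD_1[of n \<delta>] by simp

lemma RDS_2: "2 \<le> n \<Longrightarrow> wrel n \<delta> [gr (Suc 0), ge 0, gr (Suc 0), ge 0] 0 [ge 0, ge (Suc 0), ge 0]"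
  using RD_2[of n \<delta>] by simp

lemma RDS_3: "2 \<le> n \<Longrightarrow> wrel n \<delta> [gr (Suc 0), gr 0, gr (Suc 0), ge 0] 0 [ge 0, gr (Suc 0), gr 0, gr (Suc 0)]"
  using RD_3[of n \<delta>] by simp

lemma RDS_4: "2 \<le> n \<Longrightarrow> wrel n \<delta> [ge (Suc 0), gr 0, ge (Suc 0)] (Suc 0) [ge (Suc 0)]"
  using RD_4[of n \<delta>] by simp

lemma RDS_5: "2 \<le> n \<Longrightarrow> wrel n \<delta> [ge (Suc 0), ge 0, ge (Suc 0)] (Suc 0) [ge (Suc 0)]"
  using RD_5[of n \<delta>] by simp

lemma RDS_6: "2 \<le> n \<Longrightarrow> wrel n \<delta> [ge (Suc 0), gr 0, gr (Suc 0)] 0 [ge (Suc 0), gr 0]"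
  using RD_6[of n \<delta>] by simp

lemma RDS_7: "2 \<le> n \<Longrightarrow> wrel n \<delta> [ge (Suc 0), ge 0, gr (Suc 0)] 0 [ge (Suc 0), ge 0]"
  using RD_7[of n \<delta>] by simp

lemma RA_3S: "2 \<le> n \<Longrightarrow> 0 < i \<Longrightarrow> i < n \<Longrightarrow> wrel n \<delta> [ge i, ge i] 2 [ge i]"
  using RA_3[of n i \<delta>] by simp

lemma RA_30: "2 \<le> n \<Longrightarrow> wrel n \<delta> [ge 0, ge 0] (Suc 0) [ge 0]"
  using RA_3[of n 0 \<delta>] by simp

lemma all_rels:
  assumes n: "2 \<le> n" and mem: "(l, k, r) \<in> BrC_rels n"
  shows "wrel n \<delta> l k r"
proof -
  have n1: "1 < n" using n by simp
  from mem show ?thesis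
    unfolding BrC_rels_def using n1
    by (auto simp: RA_0[OF n] RA_1[OF n] RA_2[OF n] RA_3S[OF n] RA_30[OF n] RB_0[OF n] RB_1[OF n] RB_2[OF n]
          RC_0[OF n] RC_1[OF n] RC_2[OF n] RDS_0[OF n] RDS_1[OF n] RDS_2[OF n] RDS_3[OF n]
          RDS_4[OF n] RDS_5[OF n] RDS_6[OF n] RDS_7[OF n])
qed

theorem mainTheorem4:
  fixes \<delta> :: "'a::comm_ring_1" and n :: nat
  assumes "n \<ge> 2" and "\<delta> dvd 1"
  shows "(\<forall>i<n. phiC n \<delta> (gr i) \<in> SBr (2*n) \<and> phiC n \<delta> (ge i) \<in> SBr (2*n))
       \<and> (\<forall>(l, k, r) \<in> BrC_rels n.
            word_eval (2*n) \<delta> (phiC n \<delta>) l = br_smult (\<delta> ^ k) (word_eval (2*n) \<delta> (phiC n \<delta>) r))"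
proof
  show "\<forall>i<n. phiC n \<delta> (gr i) \<in> SBr (2*n) \<and> phiC n \<delta> (ge i) \<in> SBr (2*n)"
  proof (intro allI impI conjI)
    fix i assume i: "i < n"
    show "phiC n \<delta> (gr i) \<in> SBr (2*n)" by (rule phiC_SBr[OF assms(1)]) (simp add: i)
    show "phiC n \<delta> (ge i) \<in> SBr (2*n)" by (rule phiC_SBr[OF assms(1)]) (simp add: i)
  qed
  show "\<forall>(l, k, r) \<in> BrC_rels n.
            word_eval (2*n) \<delta> (phiC n \<delta>) l = br_smult (\<delta> ^ k) (word_eval (2*n) \<delta> (phiC n \<delta>) r)"
    using all_rels[OF assms(1)] unfolding wrel_def by blast
qed

end
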